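(* Let $\mathcal{H}_A,\mathcal{H}_B$ be finite-dimensional Hilbert spaces, $d_A=\dim\mathcal{H}_A\geq2$, with a fixed reference basis $\{|i\rangle_A\}$ of $\mathcal{H}_A$. For every state $\rho_{AB}$ on $\mathcal{H}_A\otimes\mathcal{H}_B$, $$1+\frac{1}{d_A-1}C^{A|B}_{l_1}(\rho_{AB})\leq 2^{C^{A|B}_{\max}(\rho_{AB})}\leq 1+C^{A|B}_{l_1}(\rho_{AB}).$$
   Context: $D_{\max}(\rho\|\sigma)=\min\{\lambda\ge0:\rho\leq2^\lambda\sigma\}$. The set $\mathcal{IQ}$ of incoherent-quantum states consists of states $\sum_kp_k\sigma^A_k\otimes\tau^B_k$ with $\sigma^A_k$ diagonal in $\{|i\rangle_A\}$ and $\tau^B_k$ arbitrary states; $C^{A|B}_{\max}(\rho_{AB})=\min_{\sigma\in\mathcal{IQ}}D_{\max}(\rho_{AB}\|\sigma)$. Writing $\rho_{AB}=\sum_{i,j}|i\rangle\langle j|_A\otimes\rho^B_{ij}$, $C^{A|B}_{l_1}(\rho_{AB})=\sum_{i\neq j}\|\rho^B_{ij}\|_{\mathrm{tr}}$ with $\|X\|_{\mathrm{tr}}=\mathrm{Tr}\sqrt{X^\dagger X}$. Logarithms are base 2. *)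

theory Defs
  imports Complex_Main "HOL-Library.Extended_Real"
begin

text \<open>Operators on a finite-dimensional Hilbert space C^n, identified with functions on a
finite index type 'n (the index type of the reference basis). Matrices are functions
'n => 'n => complex.\<close>

type_synonym 'n cmat = "'n \<Rightarrow> 'n \<Rightarrow> complex"

definition mmult :: "('n::finite) cmat \<Rightarrow> 'n cmat \<Rightarrow> 'n cmat" where
  "mmult A B = (\<lambda>i j. \<Sum>k\<in>UNIV. A i k * B k j)"

definition adj :: "('n::finite) cmat \<Rightarrow> 'n cmat" where
  "adj A = (\<lambda>i j. cnj (A j i))"

definition mtrace :: "('n::finite) cmat \<Rightarrow> complex" where
  "mtrace A = (\<Sum>i\<in>UNIV. A i i)"

definition qform :: "('n::finite) cmat \<Rightarrow> ('n \<Rightarrow> complex) \<Rightarrow> complex" where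
  "qform A v = (\<Sum>i\<in>UNIV. \<Sum>j\<in>UNIV. cnj (v i) * A i j * v j)"

definition psd :: "('n::finite) cmat \<Rightarrow> bool" where
  "psd A \<longleftrightarrow> (\<forall>v. Im (qform A v) = 0 \<and> 0 \<le> Re (qform A v))"

definition density :: "('n::finite) cmat \<Rightarrow> bool" where
  "density \<rho> \<longleftrightarrow> psd \<rho> \<and> mtrace \<rho> = 1"

definition loewner_le :: "('n::finite) cmat \<Rightarrow> 'n cmat \<Rightarrow> bool" where
  "loewner_le A B \<longleftrightarrow> psd (\<lambda>i j. B i j - A i j)"

definition msqrt :: "('n::finite) cmat \<Rightarrow> 'n cmat" where
  "msqrt A = (THE S. psd S \<and> mmult S S = A)"

definition trace_norm :: "('n::finite) cmat \<Rightarrow> real" where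
  "trace_norm X = Re (mtrace (msqrt (mmult (adj X) X)))"

definition kron :: "('a::finite) cmat \<Rightarrow> ('b::finite) cmat \<Rightarrow> ('a \<times> 'b) cmat" where
  "kron A B = (\<lambda>(i, b) (j, b'). A i j * B b b')"

definition diagonal :: "('n::finite) cmat \<Rightarrow> bool" where
  "diagonal A \<longleftrightarrow> (\<forall>i j. i \<noteq> j \<longrightarrow> A i j = 0)"

definition IQ :: "(('a::finite) \<times> ('b::finite)) cmat set" where
  "IQ = {\<sigma>. \<exists>(n::nat) (p::nat \<Rightarrow> real) (sA::nat \<Rightarrow> 'a cmat) (tB::nat \<Rightarrow> 'b cmat).
            (\<forall>k<n. 0 \<le> p k \<and> density (sA k) \<and> diagonal (sA k) \<and> density (tB k)) \<and>
            (\<Sum>k<n. p k) = 1 \<and>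
            \<sigma> = (\<lambda>x y. \<Sum>k<n. complex_of_real (p k) * kron (sA k) (tB k) x y)}"

text \<open>D_max(rho||sigma) = min{lambda >= 0 : rho <= 2^lambda sigma}, +infinity if no such lambda.\<close>
definition Dmax :: "('n::finite) cmat \<Rightarrow> 'n cmat \<Rightarrow> ereal" where
  "Dmax \<rho> \<sigma> = Inf (ereal ` {l::real. 0 \<le> l \<and>
       loewner_le \<rho> (\<lambda>i j. complex_of_real (2 powr l) * \<sigma> i j)})"

definition Cmax :: "(('a::finite) \<times> ('b::finite)) cmat \<Rightarrow> ereal" where
  "Cmax \<rho> = Inf ((\<lambda>\<sigma>. Dmax \<rho> \<sigma>) ` IQ)"

text \<open>Block rho^B_{ij} of rho_AB = sum_{ij} |i><j| (x) rho^B_{ij}.\<close>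
definition block :: "(('a::finite) \<times> ('b::finite)) cmat \<Rightarrow> 'a \<Rightarrow> 'a \<Rightarrow> 'b cmat" where
  "block \<rho> i j = (\<lambda>b b'. \<rho> (i, b) (j, b'))"

definition Cl1 :: "(('a::finite) \<times> ('b::finite)) cmat \<Rightarrow> real" where
  "Cl1 \<rho> = (\<Sum>i\<in>UNIV. \<Sum>j\<in>UNIV - {i}. trace_norm (block \<rho> i j))"

end

theory Submission
  imports Defs "HOL-Analysis.Cartesian_Euclidean_Space" "HOL-Library.Function_Algebras"
begin

lemma sum_fapply: "(\<Sum>x\<in>A. f x) i = (\<Sum>x\<in>A. f x i)"
  by (induction A rule: infinite_finite_induct) auto

definition ip :: "('n::finite \<Rightarrow> complex) \<Rightarrow> ('n \<Rightarrow> complex) \<Rightarrow> complex" where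
  "ip u v = (\<Sum>i\<in>UNIV. cnj (u i) * v i)"
definition mv :: "('n::finite) cmat \<Rightarrow> ('n \<Rightarrow> complex) \<Rightarrow> ('n \<Rightarrow> complex)" where
  "mv A v = (\<lambda>i. \<Sum>j\<in>UNIV. A i j * v j)"
definition sm :: "complex \<Rightarrow> ('n \<Rightarrow> complex) \<Rightarrow> ('n \<Rightarrow> complex)" where
  "sm c v = (\<lambda>i. c * v i)"
definition ev :: "'n \<Rightarrow> ('n \<Rightarrow> complex)" where
  "ev k = (\<lambda>i. if i = k then 1 else 0)"
definition ons :: "('i \<Rightarrow> 'n::finite \<Rightarrow> complex) \<Rightarrow> 'i set \<Rightarrow> bool" where
  "ons V I \<longleftrightarrow> (\<forall>k\<in>I. \<forall>l\<in>I. ip (V k) (V l) = (if k = l then 1 else 0))"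
definition outer :: "('n \<Rightarrow> complex) \<Rightarrow> 'n cmat" where
  "outer u = (\<lambda>i j. u i * cnj (u j))"

lemma ip_add_left: "ip (u + w) v = ip u v + ip w v"
  by (simp add: ip_def algebra_simps sum.distrib)
lemma ip_add_right: "ip v (u + w) = ip v u + ip v w"
  by (simp add: ip_def algebra_simps sum.distrib)
lemma ip_diff_left: "ip (u - w) v = ip u v - ip w v"
  by (simp add: ip_def algebra_simps sum_subtractf)
lemma ip_diff_right: "ip v (u - w) = ip v u - ip v w"
  by (simp add: ip_def algebra_simps sum_subtractf)
lemma ip_sm_left: "ip (sm c u) v = cnj c * ip u v"
  by (simp add: ip_def sm_def sum_distrib_left algebra_simps)
lemma ip_sm_right: "ip v (sm c u) = c * ip v u"
  by (simp add: ip_def sm_def sum_distrib_left algebra_simps)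
lemma ip_zero_left[simp]: "ip 0 v = 0" by (simp add: ip_def)
lemma ip_zero_right[simp]: "ip v 0 = 0" by (simp add: ip_def)
lemma ip_sum_left: "ip (\<Sum>k\<in>K. f k) v = (\<Sum>k\<in>K. ip (f k) v)"
  by (simp add: ip_def sum_fapply sum_distrib_right cnj_sum) (rule sum.swap)
lemma ip_sum_right: "ip v (\<Sum>k\<in>K. f k) = (\<Sum>k\<in>K. ip v (f k))"
  by (simp add: ip_def sum_fapply sum_distrib_left) (rule sum.swap)
lemma cnj_ip: "cnj (ip u v) = ip v u"
  by (simp add: ip_def mult.commute)
lemma ip_self_real: "Im (ip u u) = 0"
  by (metis Reals_cnj_iff cnj_ip complex_is_Real_iff)
lemma ip_self_eq: "ip u u = of_real (\<Sum>i\<in>UNIV. (cmod (u i))^2)"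
proof -
  have h: "\<And>z::complex. cnj z * z = of_real ((cmod z)^2)" by (metis complex_norm_square mult.commute)
  show ?thesis unfolding ip_def of_real_sum h ..
qed
lemma ip_self_ge: "0 \<le> Re (ip u u)"
  by (simp add: ip_self_eq sum_nonneg)
lemma ip_self_zero: "ip u u = 0 \<longleftrightarrow> u = 0"
proof
  assume "ip u u = 0"
  then have "(\<Sum>i\<in>UNIV. (cmod (u i))^2) = 0" unfolding ip_self_eq of_real_eq_0_iff .
  then have "\<forall>i\<in>UNIV. (cmod (u i))^2 = 0" by (subst (asm) sum_nonneg_eq_0_iff) auto
  then show "u = 0" by auto
qed simp
lemma ip_ev_left[simp]: "ip (ev k) v = v k"
proof -
  have "\<And>i. cnj (if i = k then 1 else 0) * v i = (if i = k then v k else 0)" by simp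
  then show ?thesis by (simp add: ip_def ev_def)
qed
lemma ip_ev_right[simp]: "ip v (ev k) = cnj (v k)"
proof -
  have "\<And>i. cnj (v i) * (if i = k then 1 else 0) = (if i = k then cnj (v k) else 0)" by simp
  then show ?thesis by (simp add: ip_def ev_def)
qed
lemma sm_apply: "sm c v i = c * v i" by (simp add: sm_def)
lemma sm_add: "sm c (u + v) = sm c u + sm c v" by (simp add: sm_def fun_eq_iff algebra_simps)
lemma sm_zero[simp]: "sm c 0 = 0" "sm 0 v = 0" "sm 1 v = v" by (auto simp: sm_def fun_eq_iff)
lemma sm_sm: "sm a (sm b v) = sm (a*b) v" by (simp add: sm_def fun_eq_iff)

lemma mv_add: "mv A (u + v) = mv A u + mv A v"
  by (simp add: mv_def fun_eq_iff algebra_simps sum.distrib)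
lemma mv_diff: "mv A (u - v) = mv A u - mv A v"
  by (simp add: mv_def fun_eq_iff algebra_simps sum_subtractf)
lemma mv_sm: "mv A (sm c v) = sm c (mv A v)"
  by (simp add: mv_def sm_def fun_eq_iff sum_distrib_left algebra_simps)
lemma mv_zero[simp]: "mv A 0 = 0" by (simp add: mv_def fun_eq_iff)
lemma mv_sum: "mv A (\<Sum>k\<in>K. f k) = (\<Sum>k\<in>K. mv A (f k))"
  by (simp add: mv_def fun_eq_iff sum_fapply sum_distrib_left sum.swap[of _ UNIV K])
lemma mv_ev: "mv A (ev j) = (\<lambda>i. A i j)"
proof -
  have "\<And>i k. A i k * (if k = j then 1 else 0) = (if k = j then A i j else 0)" by simp
  then show ?thesis by (simp add: mv_def ev_def)
qed
lemma mat_eqI: "(\<And>x. mv A x = mv B x) \<Longrightarrow> A = B"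
  by (metis mv_ev ext)
lemma mv_mmult: "mv (mmult A B) x = mv A (mv B x)"
proof (rule ext)
  fix i
  have "(\<Sum>j\<in>UNIV. (\<Sum>k\<in>UNIV. A i k * B k j) * x j) = (\<Sum>j\<in>UNIV. \<Sum>k\<in>UNIV. A i k * (B k j * x j))"
    by (simp add: sum_distrib_right mult.assoc)
  also have "\<dots> = (\<Sum>k\<in>UNIV. \<Sum>j\<in>UNIV. A i k * (B k j * x j))" by (rule sum.swap)
  also have "\<dots> = (\<Sum>k\<in>UNIV. A i k * (\<Sum>j\<in>UNIV. B k j * x j))" by (simp add: sum_distrib_left)
  finally show "mv (mmult A B) x i = mv A (mv B x) i" by (simp add: mv_def mmult_def)
qed
lemma ip_mv_adj: "ip x (mv A y) = ip (mv (adj A) x) y"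
proof -
  have "ip x (mv A y) = (\<Sum>i\<in>UNIV. \<Sum>j\<in>UNIV. cnj (x i) * A i j * y j)"
    by (simp add: ip_def mv_def sum_distrib_left mult.assoc)
  also have "\<dots> = (\<Sum>j\<in>UNIV. \<Sum>i\<in>UNIV. cnj (x i) * A i j * y j)" by (rule sum.swap)
  also have "\<dots> = ip (mv (adj A) x) y"
    by (simp add: ip_def mv_def adj_def sum_distrib_right sum_distrib_left cnj_sum mult_ac)
  finally show ?thesis .
qed
lemma qform_ip: "qform A v = ip v (mv A v)"
  by (simp add: qform_def ip_def mv_def sum_distrib_left mult.assoc)
lemma ip_vec_eqI: "(\<And>w. ip w u = ip w v) \<Longrightarrow> u = v"
  by (metis ip_ev_left ext)

lemma mtrace_ev: "mtrace A = (\<Sum>i\<in>UNIV. ip (ev i) (mv A (ev i)))"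
  by (simp add: mtrace_def mv_ev)

lemma mv_outer: "mv (outer u) x = sm (ip u x) u"
  by (simp add: mv_def outer_def sm_def ip_def fun_eq_iff sum_distrib_left mult_ac)
lemma qform_outer: "qform (outer u) x = of_real ((cmod (ip u x))^2)"
proof -
  have h1: "ip x u = cnj (ip u x)" by (simp add: cnj_ip)
  have "qform (outer u) x = ip u x * cnj (ip u x)" by (simp add: qform_ip mv_outer ip_sm_right h1)
  also have "\<dots> = of_real ((cmod (ip u x))^2)" by (rule complex_norm_square[symmetric])
  finally show ?thesis .
qed
lemma mtrace_outer: "mtrace (outer u) = ip u u"
  by (simp add: mtrace_def outer_def ip_def mult.commute)

lemma qform_add: "qform A (x + y) = qform A x + qform A y + ip x (mv A y) + ip y (mv A x)"
  by (simp add: qform_ip mv_add ip_add_left ip_add_right)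
lemma qform_sm: "qform A (sm c x) = cnj c * c * qform A x"
  by (simp add: qform_ip mv_sm ip_sm_left ip_sm_right)
lemma qform_zero[simp]: "qform A 0 = 0"
  by (simp add: qform_ip)

lemma psd_herm: assumes "psd A" shows "adj A = A"
proof -
  have im: "\<And>v. Im (qform A v) = 0" using assms by (simp add: psd_def)
  have key: "ip x (mv A y) = cnj (ip y (mv A x))" for x y
  proof -
    let ?a = "ip x (mv A y)" and ?b = "ip y (mv A x)"
    have h1: "Im (?a + ?b) = 0" using im[of "x + y"] im[of x] im[of y] by (simp add: qform_add)
    have h2: "Im (\<i> * ?a - \<i> * ?b) = 0"
      using im[of "x + sm \<i> y"] im[of x] im[of "sm \<i> y"]
      by (simp add: qform_add mv_sm ip_sm_left ip_sm_right)
    show "?a = cnj ?b" using h1 h2 by (simp add: complex_eq_iff)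
  qed
  show ?thesis
  proof (rule ext, rule ext)
    fix i j
    have "A i j = ip (ev i) (mv A (ev j))" by (simp add: mv_ev)
    also have "\<dots> = cnj (ip (ev j) (mv A (ev i)))" by (rule key)
    also have "\<dots> = adj A i j" by (simp add: mv_ev adj_def)
    finally show "adj A i j = A i j" by simp
  qed
qed

lemma herm_ip: "adj A = A \<Longrightarrow> ip (mv A x) y = ip x (mv A y)"
  by (metis ip_mv_adj)

lemma herm_qform_real: assumes "adj A = A" shows "qform A v = of_real (Re (qform A v))"
proof -
  have "cnj (qform A v) = qform A v"
    by (simp add: qform_ip cnj_ip herm_ip[OF assms])
  then show ?thesis by (metis Reals_cnj_iff complex_is_Real_iff of_real_Re)
qed

lemma psd_iff: "psd A \<longleftrightarrow> adj A = A \<and> (\<forall>v. 0 \<le> Re (qform A v))"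
proof
  assume "psd A" then show "adj A = A \<and> (\<forall>v. 0 \<le> Re (qform A v))"
    using psd_herm psd_def by blast
next
  assume h: "adj A = A \<and> (\<forall>v. 0 \<le> Re (qform A v))"
  then have "Im (qform A v) = 0" for v by (metis Im_complex_of_real herm_qform_real)
  then show "psd A" using h by (simp add: psd_def)
qed

interpretation cvs: vector_space "sm :: complex \<Rightarrow> ('n \<Rightarrow> complex) \<Rightarrow> ('n \<Rightarrow> complex)"
  by unfold_locales (simp_all add: sm_def fun_eq_iff algebra_simps)

lemma vec_decomp_ev: fixes v :: "'n::finite \<Rightarrow> complex" shows "v = (\<Sum>i\<in>UNIV. sm (v i) (ev i))"
proof (rule ext)
  fix j
  have "(\<Sum>i\<in>UNIV. sm (v i) (ev i)) j = (\<Sum>i\<in>UNIV. if j = i then v j else 0)"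
    unfolding sum_fapply sm_def ev_def by (rule sum.cong) auto
  also have "\<dots> = v j" by simp
  finally show "v j = (\<Sum>i\<in>UNIV. sm (v i) (ev i)) j" by simp
qed

lemma span_ev: "v \<in> cvs.span (range (ev :: 'n::finite \<Rightarrow> _))"
proof -
  have "(\<Sum>i\<in>UNIV. sm (v i) (ev i)) \<in> cvs.span (range ev)"
    by (intro cvs.span_sum cvs.span_scale cvs.span_base) auto
  then show ?thesis using vec_decomp_ev[of v] by simp
qed

lemma ev_inj: "inj ev"
proof (rule injI)
  fix i j assume "ev i = ev j"
  then have "ev i i = ev j i" by simp
  then show "i = j" by (simp add: ev_def split: if_splits)
qed

lemma ons_set_indep:
  fixes S :: "('n::finite \<Rightarrow> complex) set"
  assumes fin: "finite S" and on: "\<And>x y. x \<in> S \<Longrightarrow> y \<in> S \<Longrightarrow> ip x y = (if x = y then 1 else 0)"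
  shows "cvs.independent S"
proof (rule cvs.independent_if_scalars_zero[OF fin])
  fix f x assume s: "(\<Sum>y\<in>S. sm (f y) y) = 0" and x: "x \<in> S"
  have "0 = ip x (\<Sum>y\<in>S. sm (f y) y)" by (simp add: s)
  also have "\<dots> = (\<Sum>y\<in>S. f y * ip x y)" by (simp add: ip_sum_right ip_sm_right)
  also have "\<dots> = (\<Sum>y\<in>S. if x = y then f y else 0)"
    by (rule sum.cong) (auto simp: on x)
  also have "\<dots> = f x" using x fin by (simp add: sum.delta)
  finally show "f x = 0" by simp
qed

lemma ons_inj: assumes "ons V I" shows "inj_on V I"
proof (rule inj_onI)
  fix k l assume k: "k \<in> I" and l: "l \<in> I" and e: "V k = V l"
  have "ip (V k) (V l) = ip (V l) (V l)" using e by simp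
  also have "\<dots> = 1" using assms l by (simp add: ons_def)
  finally have "ip (V k) (V l) = 1" .
  then show "k = l" using assms k l unfolding ons_def by (metis zero_neq_one)
qed

lemma ons_image:
  assumes "ons V I" "x \<in> V ` I" "y \<in> V ` I"
  shows "ip x y = (if x = y then 1 else 0)"
  using assms unfolding ons_def by auto

lemma ons_card:
  fixes V :: "'i \<Rightarrow> 'n::finite \<Rightarrow> complex"
  assumes fin: "finite I" and on: "ons V I"
  shows "card I \<le> CARD('n)"
proof -
  have ind: "cvs.independent (V ` I)"
    by (rule ons_set_indep) (use fin ons_image[OF on] in auto)
  have "V ` I \<subseteq> cvs.span (range ev)" using span_ev by auto
  then have "card (V ` I) \<le> card (range (ev :: 'n \<Rightarrow> _))"
    using cvs.independent_span_bound[OF _ ind] by auto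
  also have "\<dots> \<le> CARD('n)" by (rule card_image_le) simp
  finally show ?thesis using card_image[OF ons_inj[OF on]] by simp
qed

lemma proj_orth:
  assumes fin: "finite I" and on: "ons V I" and j: "j \<in> I"
  shows "ip (V j) (x - (\<Sum>k\<in>I. sm (ip (V k) x) (V k))) = 0"
proof -
  have "ip (V j) (\<Sum>k\<in>I. sm (ip (V k) x) (V k)) = (\<Sum>k\<in>I. ip (V k) x * ip (V j) (V k))"
    by (simp add: ip_sum_right ip_sm_right)
  also have "\<dots> = (\<Sum>k\<in>I. if j = k then ip (V k) x else 0)"
    by (rule sum.cong) (use on j in \<open>auto simp: ons_def\<close>)
  also have "\<dots> = ip (V j) x" using fin j by (simp add: sum.delta)
  finally show ?thesis by (simp add: ip_diff_right)
qed

lemma ons_exists_orth: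
  fixes V :: "'i \<Rightarrow> 'n::finite \<Rightarrow> complex"
  assumes fin: "finite I" and on: "ons V I" and card: "card I < CARD('n)"
  shows "\<exists>x. x \<noteq> 0 \<and> (\<forall>k\<in>I. ip (V k) x = 0)"
proof (rule ccontr)
  assume "\<not> ?thesis"
  then have all: "\<And>x. (\<forall>k\<in>I. ip (V k) x = 0) \<Longrightarrow> x = 0" by blast
  have sp: "x \<in> cvs.span (V ` I)" for x
  proof -
    have "x - (\<Sum>k\<in>I. sm (ip (V k) x) (V k)) = 0"
      by (rule all) (use proj_orth[OF fin on] in auto)
    then have "x = (\<Sum>k\<in>I. sm (ip (V k) x) (V k))" by simp
    moreover have "(\<Sum>k\<in>I. sm (ip (V k) x) (V k)) \<in> cvs.span (V ` I)"
      by (intro cvs.span_sum cvs.span_scale cvs.span_base) auto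
    ultimately show ?thesis by simp
  qed
  have ind: "cvs.independent (range (ev :: 'n \<Rightarrow> _))"
  proof (rule ons_set_indep)
    fix x y assume "x \<in> range (ev :: 'n \<Rightarrow> _)" "y \<in> range (ev :: 'n \<Rightarrow> _)"
    then obtain a b where ab: "x = ev a" "y = ev b" by auto
    have "ip (ev a) (ev b) = (if a = b then 1 else 0)" by (subst ip_ev_left) (simp add: ev_def)
    moreover have "(ev a = ev b) = (a = b)" by (rule inj_eq[OF ev_inj])
    ultimately show "ip x y = (if x = y then 1 else 0)" using ab by simp
  qed simp
  have "card (range (ev :: 'n \<Rightarrow> _)) \<le> card (V ` I)"
    using cvs.independent_span_bound[OF _ ind] sp fin by auto
  also have "\<dots> \<le> card I" using fin by (rule card_image_le)
  moreover have "card (range (ev :: 'n \<Rightarrow> _)) = CARD('n)" by (rule card_image[OF ev_inj])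
  ultimately have "CARD('n) \<le> card I" by simp
  then show False using card by simp
qed

lemma quad_zero:
  fixes N Q :: real
  assumes N: "N \<ge> 0" and h: "\<And>t. 2*t*N + t^2*Q \<le> 0"
  shows "N = 0"
proof (rule ccontr)
  assume "N \<noteq> 0" then have N: "N > 0" using N by simp
  define t where "t = N / (\<bar>Q\<bar> + 1)"
  have tpos: "t > 0" using N by (simp add: t_def)
  have "t * \<bar>Q\<bar> \<le> N"
    using N by (simp add: t_def field_simps)
  then have "t * (t * \<bar>Q\<bar>) \<le> t * N" using tpos by (simp add: mult_left_mono)
  moreover have "t^2 * (- \<bar>Q\<bar>) \<le> t^2 * Q" by (rule mult_left_mono) auto
  then have "- (t * (t * \<bar>Q\<bar>)) \<le> t^2 * Q" by (simp add: power2_eq_square)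
  ultimately have "t * N \<le> 2*t*N + t^2*Q" by linarith
  moreover have "t * N > 0" using tpos N by simp
  ultimately show False using h[of t] by linarith
qed

lemma norm_vec_ip: "(norm (x :: complex^'n))^2 = Re (ip (vec_nth x) (vec_nth x))"
proof -
  have "(norm x)^2 = (\<Sum>i\<in>UNIV. (cmod (x $ i))^2)"
    unfolding norm_vec_def L2_set_def by (simp add: sum_nonneg)
  then show ?thesis by (simp add: ip_self_eq)
qed

lemma ip_real: "ip u u = of_real (Re (ip u u))"
  by (simp add: ip_self_eq)

lemma normalize_vec:
  assumes "x \<noteq> 0"
  shows "\<exists>c. ip (sm c x) (sm c x) = 1 \<and> c \<noteq> 0"
proof -
  define s where "s = Re (ip x x)"
  have "ip x x \<noteq> 0" using assms ip_self_zero by blast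
  then have s: "s > 0" using ip_self_ge[of x] ip_real[of x] unfolding s_def
    by (metis less_eq_real_def of_real_0)
  define c where "c = complex_of_real (1 / sqrt s)"
  have ixx: "ip x x = of_real s" unfolding s_def by (rule ip_real)
  have "ip (sm c x) (sm c x) = cnj c * c * ip x x" by (simp add: ip_sm_left ip_sm_right)
  also have "\<dots> = of_real (1 / sqrt s * (1 / sqrt s) * s)"
    unfolding c_def ixx complex_cnj_complex_of_real of_real_mult[symmetric] by (rule refl)
  also have "1 / sqrt s * (1 / sqrt s) * s = 1" using s
    by (simp add: field_simps real_sqrt_mult_self)
  then have "complex_of_real (1 / sqrt s * (1 / sqrt s) * s) = 1" by simp
  finally show ?thesis using s by (auto simp: c_def)
qed

lemma eig_step:
  fixes A :: "'n::finite cmat" and V :: "'n \<Rightarrow> 'n \<Rightarrow> complex"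
  assumes herm: "adj A = A" and fin: "finite I" and on: "ons V I"
    and eig: "\<And>k. k \<in> I \<Longrightarrow> mv A (V k) = sm (of_real (d k)) (V k)"
    and card: "card I < CARD('n)"
  shows "\<exists>w a. ip w w = 1 \<and> (\<forall>k\<in>I. ip (V k) w = 0) \<and> mv A w = sm (of_real a) w"
proof -
  define K where "K = {x::complex^'n. norm x = 1} \<inter> (\<Inter>k\<in>I. {x. ip (V k) (vec_nth x) = 0})"
  have contip: "continuous_on UNIV (\<lambda>x::complex^'n. ip u (vec_nth x))" for u
    unfolding ip_def by (intro continuous_intros)
  have "closed K" unfolding K_def
    by (intro closed_Int closed_INT ballI closed_Collect_eq contip continuous_intros)
  moreover have "bounded K" unfolding K_def
    by (rule bounded_Int) (auto simp: bounded_iff)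
  ultimately have compK: "compact K" by (simp add: compact_eq_bounded_closed)
  have inK: "vec_lambda y \<in> K" if "ip y y = 1" "\<forall>k\<in>I. ip (V k) y = 0" for y
  proof -
    have "(norm (vec_lambda y :: complex^'n))^2 = 1"
      using that by (simp add: norm_vec_ip vec_lambda_inverse)
    then have "norm (vec_lambda y :: complex^'n) = 1 \<or> norm (vec_lambda y :: complex^'n) = -1"
      by (simp only: power2_eq_1_iff)
    then have "norm (vec_lambda y :: complex^'n) = 1" using norm_ge_zero[of "vec_lambda y :: complex^'n"] by linarith
    then show ?thesis using that by (simp add: K_def vec_lambda_inverse)
  qed
  obtain x0 where x0: "x0 \<noteq> 0" "\<forall>k\<in>I. ip (V k) x0 = 0"
    using ons_exists_orth[OF fin on card] by blast
  obtain c0 where c0: "ip (sm c0 x0) (sm c0 x0) = 1" using normalize_vec[OF x0(1)] by blast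
  have "vec_lambda (sm c0 x0) \<in> K"
    by (rule inK[OF c0]) (use x0 in \<open>simp add: ip_sm_right\<close>)
  then have Kne: "K \<noteq> {}" by blast
  define f where "f x = Re (qform A (vec_nth x))" for x :: "complex^'n"
  have contf: "continuous_on K f"
    unfolding f_def qform_def by (intro continuous_intros)
  obtain x1 where x1: "x1 \<in> K" and x1max: "\<And>y. y \<in> K \<Longrightarrow> f y \<le> f x1"
    using continuous_attains_sup[OF compK Kne contf] by blast
  define w where "w = vec_nth x1"
  define a where "a = Re (qform A w)"
  have ww: "ip w w = 1"
  proof -
    have "norm x1 = 1" using x1 by (simp add: K_def)
    then have "Re (ip w w) = 1" using norm_vec_ip[of x1] by (simp add: w_def)
    then show ?thesis by (subst ip_real) simp
  qed
  have worth: "\<forall>k\<in>I. ip (V k) w = 0" using x1 by (simp add: K_def w_def)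
  have maxg: "Re (qform A y) \<le> a * Re (ip y y)" if yo: "\<forall>k\<in>I. ip (V k) y = 0" for y
  proof (cases "y = 0")
    case True then show ?thesis by simp
  next
    case False
    obtain c where c: "ip (sm c y) (sm c y) = 1" "c \<noteq> 0" using normalize_vec[OF False] by blast
    have "vec_lambda (sm c y) \<in> K"
      by (rule inK[OF c(1)]) (use yo in \<open>simp add: ip_sm_right\<close>)
    then have "f (vec_lambda (sm c y)) \<le> f x1" by (rule x1max)
    then have le: "Re (qform A (sm c y)) \<le> a"
      by (simp add: f_def a_def w_def vec_lambda_inverse)
    have cc: "cnj c * c = of_real ((cmod c)^2)" by (metis complex_norm_square mult.commute)
    have "1 = Re (ip (sm c y) (sm c y))" using c by simp
    also have "ip (sm c y) (sm c y) = (cnj c * c) * ip y y" by (simp add: ip_sm_left ip_sm_right mult.assoc)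
    then have "Re (ip (sm c y) (sm c y)) = (cmod c)^2 * Re (ip y y)" unfolding cc by simp
    finally have n1: "(cmod c)^2 * Re (ip y y) = 1" by simp
    have "(cmod c)^2 * Re (qform A y) = Re (qform A (sm c y))"
      by (simp add: qform_sm cc)
    also have "\<dots> \<le> a * ((cmod c)^2 * Re (ip y y))" using le n1 by simp
    finally have "(cmod c)^2 * Re (qform A y) \<le> (cmod c)^2 * (a * Re (ip y y))" by (simp add: mult_ac)
    moreover have "(cmod c)^2 > 0" using c(2) by simp
    ultimately show ?thesis by simp
  qed
  have qw: "qform A w = of_real a" unfolding a_def by (rule herm_qform_real[OF herm])
  define r where "r = mv A w - sm (of_real a) w"
  have Aw: "mv A w = r + sm (of_real a) w" by (simp add: r_def)
  have rorth: "\<forall>k\<in>I. ip (V k) r = 0"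
  proof
    fix k assume k: "k \<in> I"
    have "ip (V k) (mv A w) = ip (mv A (V k)) w" by (simp add: herm_ip[OF herm])
    also have "\<dots> = 0" using eig[OF k] worth k by (simp add: ip_sm_left)
    finally show "ip (V k) r = 0" using worth k by (simp add: r_def ip_diff_right ip_sm_right)
  qed
  have wr: "ip w r = 0"
    by (simp add: r_def ip_diff_right ip_sm_right ww qw[unfolded qform_ip])
  have rw: "ip r w = 0" using wr cnj_ip[of w r] by simp
  have e1: "ip w (mv A r) = ip r r"
    by (simp add: herm_ip[OF herm, symmetric] Aw ip_add_left ip_sm_left rw wr)
  have e2: "ip r (mv A w) = ip r r"
    by (simp add: Aw ip_add_right ip_sm_right rw wr)
  define N where "N = Re (ip r r)"
  define Q where "Q = Re (qform A r)"
  have quad: "2*t*N + t^2*(Q - a*N) \<le> 0" for t :: real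
  proof -
    define y where "y = w + sm (of_real t) r"
    have yo: "\<forall>k\<in>I. ip (V k) y = 0" using worth rorth by (simp add: y_def ip_add_right ip_sm_right)
    have iy: "ip y y = 1 + of_real t * of_real t * ip r r"
      by (simp add: y_def ip_add_left ip_add_right ip_sm_left ip_sm_right ww wr rw)
    have qy: "qform A y = of_real a + 2 * of_real t * ip r r + of_real t * of_real t * qform A r"
      by (simp add: y_def qform_ip mv_add mv_sm ip_add_left ip_add_right ip_sm_left ip_sm_right
          e1 e2 qw[unfolded qform_ip] algebra_simps)
    have "Re (qform A y) \<le> a * Re (ip y y)" by (rule maxg[OF yo])
    then have "a + 2*t*N + t*t*Q \<le> a * (1 + t*t*N)"
      by (simp add: qy iy N_def Q_def)
    then show ?thesis by (simp add: power2_eq_square algebra_simps)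
  qed
  have "N = 0" by (rule quad_zero[OF _ quad]) (simp add: N_def ip_self_ge)
  then have "ip r r = 0" by (subst ip_real) (simp add: N_def)
  then have "r = 0" by (simp add: ip_self_zero)
  then have "mv A w = sm (of_real a) w" by (simp add: Aw)
  then show ?thesis using ww worth by blast
qed

lemma spectral_partial:
  fixes A :: "'n::finite cmat"
  assumes herm: "adj A = A"
  shows "k \<le> CARD('n) \<Longrightarrow> \<exists>I (V::'n \<Rightarrow> 'n \<Rightarrow> complex) d. card I = k \<and> ons V I \<and>
           (\<forall>j\<in>I. mv A (V j) = sm (of_real (d j)) (V j))"
proof (induction k)
  case 0 show ?case by (rule exI[of _ "{}"]) (simp add: ons_def)
next
  case (Suc k)
  then obtain I and V :: "'n \<Rightarrow> 'n \<Rightarrow> complex" and d where IH: "card I = k" "ons V I"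
      "\<forall>j\<in>I. mv A (V j) = sm (of_real (d j)) (V j)" by auto
  have fin: "finite I" by simp
  have lt: "card I < CARD('n)" using Suc.prems IH(1) by simp
  then have "I \<noteq> UNIV" by auto
  then obtain j where j: "j \<notin> I" by auto
  obtain w a where w: "ip w w = 1" "\<forall>k\<in>I. ip (V k) w = 0" "mv A w = sm (of_real a) w"
    using eig_step[OF herm fin IH(2) _ lt] IH(3) by blast
  define V' where "V' = V(j := w)"
  define d' where "d' = d(j := a)"
  have "ons V' (insert j I)"
    unfolding ons_def
  proof (intro ballI)
    fix k l assume k: "k \<in> insert j I" and l: "l \<in> insert j I"
    show "ip (V' k) (V' l) = (if k = l then 1 else 0)"
    proof (cases "k = j")
      case True
      show ?thesis
      proof (cases "l = j")
        case True then show ?thesis using \<open>k = j\<close> w by (simp add: V'_def)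
      next
        case False
        then have "l \<in> I" using l by simp
        then have "ip (V l) w = 0" using w by simp
        then have "ip w (V l) = 0" using cnj_ip[of "V l" w] by simp
        then show ?thesis using \<open>k = j\<close> False by (simp add: V'_def)
      qed
    next
      case False
      then have kI: "k \<in> I" using k by simp
      show ?thesis
      proof (cases "l = j")
        case True then show ?thesis using kI w False by (simp add: V'_def)
      next
        case False
        then have "l \<in> I" using l by simp
        then show ?thesis using kI IH(2) \<open>k \<noteq> j\<close> False by (simp add: V'_def ons_def)
      qed
    qed
  qed
  moreover have "card (insert j I) = Suc k" using j IH(1) by simp
  moreover have "\<forall>i\<in>insert j I. mv A (V' i) = sm (of_real (d' i)) (V' i)"
    using IH(3) w j by (auto simp: V'_def d'_def)
  ultimately show ?case by blast
qed

theorem spectral: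
  fixes A :: "'n::finite cmat" assumes "adj A = A"
  shows "\<exists>V d. ons V (UNIV::'n set) \<and> (\<forall>j. mv A (V j) = sm (of_real (d j)) (V j))"
proof -
  obtain I and V :: "'n \<Rightarrow> 'n \<Rightarrow> complex" and d where h: "card I = CARD('n)" "ons V I"
      "\<forall>j\<in>I. mv A (V j) = sm (of_real (d j)) (V j)"
    using spectral_partial[OF assms, of "CARD('n)"] by auto
  have "I = UNIV" by (rule card_eq_UNIV_imp_eq_UNIV) (simp_all add: h(1))
  then show ?thesis using h by blast
qed

lemma ons_complete:
  fixes V :: "'n \<Rightarrow> 'n::finite \<Rightarrow> complex"
  assumes on: "ons V UNIV"
  shows "x = (\<Sum>k\<in>UNIV. sm (ip (V k) x) (V k))"
proof (rule ccontr)
  define y where "y = x - (\<Sum>k\<in>UNIV. sm (ip (V k) x) (V k))"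
  assume "x \<noteq> (\<Sum>k\<in>UNIV. sm (ip (V k) x) (V k))"
  then have "y \<noteq> 0" by (simp add: y_def)
  then obtain c where c: "ip (sm c y) (sm c y) = 1" using normalize_vec by blast
  define z where "z = sm c y"
  have zo: "ip (V k) z = 0" for k
    using proj_orth[OF _ on, of k x] by (simp add: z_def ip_sm_right y_def)
  define U :: "'n option \<Rightarrow> 'n \<Rightarrow> complex" where "U = (\<lambda>q. case q of None \<Rightarrow> z | Some k \<Rightarrow> V k)"
  have "ons U (insert None (Some ` UNIV))"
    unfolding ons_def
  proof (intro ballI)
    fix k l :: "'n option"
    show "ip (U k) (U l) = (if k = l then 1 else 0)"
    proof (cases k)
      case None
      show ?thesis
      proof (cases l)
        case None then show ?thesis using \<open>k = None\<close> c by (simp add: U_def z_def)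
      next
        case (Some b)
        have "ip z (V b) = 0" using zo[of b] cnj_ip[of "V b" z] by simp
        then show ?thesis using \<open>k = None\<close> Some by (simp add: U_def)
      qed
    next
      case (Some a)
      show ?thesis
      proof (cases l)
        case None then show ?thesis using Some zo by (simp add: U_def)
      next
        case (Some b)
        then show ?thesis using \<open>k = Some a\<close> on by (simp add: U_def ons_def)
      qed
    qed
  qed
  then have "card (insert None (Some ` (UNIV::'n set))) \<le> CARD('n)"
    by (intro ons_card) simp_all
  moreover have "card (insert None (Some ` (UNIV::'n set))) = Suc CARD('n)"
    by (simp add: card_image)
  ultimately show False by simp
qed

lemma ons_vec_eqI:
  fixes E :: "'n \<Rightarrow> 'n::finite \<Rightarrow> complex"
  assumes on: "ons E UNIV" and h: "\<And>m. ip u (E m) = ip v (E m)"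
  shows "u = v"
proof -
  have "\<And>m. ip (E m) u = ip (E m) v" using h cnj_ip by metis
  then show ?thesis using ons_complete[OF on, of u] ons_complete[OF on, of v] by simp
qed

lemma mv_sum_eig:
  assumes "\<And>k. mv B (V k) = sm (f k) (V k)"
  shows "mv B (\<Sum>k\<in>K. sm (g k) (V k)) = (\<Sum>k\<in>K. sm (g k * f k) (V k))"
  by (simp add: mv_sum mv_sm assms sm_sm)

lemma spec_mv:
  fixes V :: "'n \<Rightarrow> 'n::finite \<Rightarrow> complex"
  assumes on: "ons V UNIV" and eig: "\<And>k. mv A (V k) = sm (f k) (V k)"
  shows "mv A x = (\<Sum>k\<in>UNIV. sm (ip (V k) x * f k) (V k))"
proof -
  have "mv A x = mv A (\<Sum>k\<in>UNIV. sm (ip (V k) x) (V k))"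
    by (rule arg_cong[where f="mv A"]) (rule ons_complete[OF on])
  also have "\<dots> = (\<Sum>k\<in>UNIV. sm (ip (V k) x * f k) (V k))" by (rule mv_sum_eig[OF eig])
  finally show ?thesis .
qed

lemma ip_sum_eig:
  fixes V :: "'i \<Rightarrow> 'n::finite \<Rightarrow> complex"
  shows "ip x (\<Sum>k\<in>K. sm (ip (V k) x * f k) (V k)) = (\<Sum>k\<in>K. of_real ((cmod (ip (V k) x))^2) * f k)"
proof -
  have "ip x (\<Sum>k\<in>K. sm (ip (V k) x * f k) (V k)) = (\<Sum>k\<in>K. ip (V k) x * f k * ip x (V k))"
    by (simp add: ip_sum_right ip_sm_right)
  also have "\<dots> = (\<Sum>k\<in>K. of_real ((cmod (ip (V k) x))^2) * f k)"
  proof (rule sum.cong)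
    fix k
    have "ip (V k) x * ip x (V k) = of_real ((cmod (ip (V k) x))^2)"
      using complex_norm_square[of "ip (V k) x"] cnj_ip[of "V k" x] by simp
    then show "ip (V k) x * f k * ip x (V k) = of_real ((cmod (ip (V k) x))^2) * f k"
      by (simp add: mult_ac)
  qed simp
  finally show ?thesis .
qed

lemma spec_qform:
  fixes V :: "'n \<Rightarrow> 'n::finite \<Rightarrow> complex"
  assumes on: "ons V UNIV" and eig: "\<And>k. mv A (V k) = sm (f k) (V k)"
  shows "qform A x = (\<Sum>k\<in>UNIV. of_real ((cmod (ip (V k) x))^2) * f k)"
  by (simp add: qform_ip spec_mv[OF on eig] ip_sum_eig)

lemma parseval:
  fixes V :: "'n \<Rightarrow> 'n::finite \<Rightarrow> complex"
  assumes on: "ons V UNIV"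
  shows "Re (ip x x) = (\<Sum>k\<in>UNIV. (cmod (ip (V k) x))^2)"
proof -
  have "ip x x = ip x (\<Sum>k\<in>UNIV. sm (ip (V k) x * 1) (V k))"
    using ons_complete[OF on, of x] by simp
  also have "\<dots> = (\<Sum>k\<in>UNIV. of_real ((cmod (ip (V k) x))^2) * 1)" by (rule ip_sum_eig)
  finally show ?thesis by simp
qed

lemma bessel:
  assumes fin: "finite K" and on: "ons W K"
  shows "(\<Sum>k\<in>K. (cmod (ip (W k) x))^2) \<le> Re (ip x x)"
proof -
  define P where "P = (\<Sum>k\<in>K. sm (ip (W k) x) (W k))"
  have o: "ip (W j) (x - P) = 0" if "j \<in> K" for j
    unfolding P_def by (rule proj_orth[OF fin on that])
  have "ip P (x - P) = (\<Sum>k\<in>K. cnj (ip (W k) x) * ip (W k) (x - P))"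
    by (simp add: P_def ip_sum_left ip_sm_left)
  also have "\<dots> = 0" using o by simp
  finally have pP: "ip P (x - P) = 0" .
  have "ip x P = (\<Sum>k\<in>K. of_real ((cmod (ip (W k) x))^2) * 1)"
    unfolding P_def using ip_sum_eig[where f="\<lambda>_. 1" and V=W and K=K and x=x] by simp
  then have xP: "ip x P = of_real (\<Sum>k\<in>K. (cmod (ip (W k) x))^2)" by simp
  have "ip (x - P) (x - P) = ip x (x - P)" using pP by (simp add: ip_diff_left)
  also have "\<dots> = ip x x - ip x P" by (simp add: ip_diff_right)
  finally have "Re (ip (x - P) (x - P)) = Re (ip x x) - (\<Sum>k\<in>K. (cmod (ip (W k) x))^2)"
    by (simp add: xP)
  then show ?thesis using ip_self_ge[of "x - P"] by simp
qed

definition wsum :: "('i::finite \<Rightarrow> 'n \<Rightarrow> complex) \<Rightarrow> ('i \<Rightarrow> complex) \<Rightarrow> 'n cmat" where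
  "wsum V f = (\<lambda>i j. \<Sum>k\<in>UNIV. f k * V k i * cnj (V k j))"

lemma adj_adj[simp]: "adj (adj A) = A" by (simp add: adj_def)
lemma adj_mmult: "adj (mmult A B) = mmult (adj B) (adj A)"
  by (simp add: adj_def mmult_def fun_eq_iff mult.commute)
lemma ip_adj: "ip x (mv (adj A) y) = ip (mv A x) y"
  using ip_mv_adj[of x "adj A" y] by simp

lemma mv_wsum: "mv (wsum V f) x = (\<Sum>k\<in>UNIV. sm (ip (V k) x * f k) (V k))"
proof (rule ext)
  fix i
  have "mv (wsum V f) x i = (\<Sum>j\<in>UNIV. \<Sum>k\<in>UNIV. f k * V k i * cnj (V k j) * x j)"
    by (simp add: mv_def wsum_def sum_distrib_right)
  also have "\<dots> = (\<Sum>k\<in>UNIV. \<Sum>j\<in>UNIV. f k * V k i * cnj (V k j) * x j)" by (rule sum.swap)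
  also have "\<dots> = (\<Sum>k\<in>UNIV. sm (ip (V k) x * f k) (V k)) i"
    by (simp add: sum_fapply sm_def ip_def sum_distrib_left sum_distrib_right mult_ac)
  finally show "mv (wsum V f) x i = (\<Sum>k\<in>UNIV. sm (ip (V k) x * f k) (V k)) i" .
qed

lemma qform_wsum: "qform (wsum V f) x = (\<Sum>k\<in>UNIV. of_real ((cmod (ip (V k) x))^2) * f k)"
  by (simp add: qform_ip mv_wsum ip_sum_eig)

lemma mtrace_wsum: "mtrace (wsum V f) = (\<Sum>k\<in>UNIV. f k * ip (V k) (V k))"
proof -
  have "mtrace (wsum V f) = (\<Sum>i\<in>UNIV. \<Sum>k\<in>UNIV. f k * V k i * cnj (V k i))"
    by (simp add: mtrace_def wsum_def)
  also have "\<dots> = (\<Sum>k\<in>UNIV. \<Sum>i\<in>UNIV. f k * V k i * cnj (V k i))" by (rule sum.swap)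
  also have "\<dots> = (\<Sum>k\<in>UNIV. f k * ip (V k) (V k))"
    by (simp add: ip_def sum_distrib_left mult_ac)
  finally show ?thesis .
qed

lemma adj_wsum: assumes "\<And>k. cnj (f k) = f k" shows "adj (wsum V f) = wsum V f"
  using assms by (simp add: adj_def wsum_def fun_eq_iff mult_ac)

lemma psd_wsum: assumes "\<And>k. f k = of_real (g k)" "\<And>k. g k \<ge> 0" shows "psd (wsum V f)"
  unfolding psd_iff
proof
  show "adj (wsum V f) = wsum V f" by (rule adj_wsum) (simp add: assms(1))
  show "\<forall>v. 0 \<le> Re (qform (wsum V f) v)"
    by (simp add: qform_wsum assms sum_nonneg)
qed

lemma wsum_eig:
  fixes V :: "'n \<Rightarrow> 'n::finite \<Rightarrow> complex"
  assumes on: "ons V UNIV"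
  shows "mv (wsum V f) (V m) = sm (f m) (V m)"
proof -
  have "mv (wsum V f) (V m) = (\<Sum>k\<in>UNIV. if k = m then sm (f m) (V m) else 0)"
    unfolding mv_wsum by (rule sum.cong) (use on in \<open>auto simp: ons_def\<close>)
  also have "\<dots> = sm (f m) (V m)" by simp
  finally show ?thesis .
qed

lemma sqrt_unique:
  fixes V :: "'n \<Rightarrow> 'n::finite \<Rightarrow> complex"
  assumes on: "ons V UNIV" and eigH: "\<And>k. mv H (V k) = sm (of_real (d k)) (V k)"
    and dpos: "\<And>k. d k \<ge> 0" and S: "psd S" and SS: "mmult S S = H"
  shows "S = wsum V (\<lambda>k. of_real (sqrt (d k)))"
proof -
  have hS: "adj S = S" using S by (rule psd_herm)
  obtain E and s :: "'n \<Rightarrow> real" where onE: "ons E UNIV"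
    and eigS: "\<And>m. mv S (E m) = sm (of_real (s m)) (E m)"
    using spectral[OF hS] by blast
  have spos: "s m \<ge> 0" for m
  proof -
    have "qform S (E m) = of_real (s m)"
      using onE by (simp add: qform_ip eigS ip_sm_right ons_def)
    then show ?thesis using S by (metis psd_def Re_complex_of_real)
  qed
  have key: "ip (V k) (mv S (E m)) = of_real (sqrt (d k)) * ip (V k) (E m)" for k m
  proof (cases "ip (V k) (E m) = 0")
    case True then show ?thesis by (simp add: eigS ip_sm_right)
  next
    case False
    have "ip (V k) (mv H (E m)) = ip (V k) (mv S (mv S (E m)))" by (simp add: SS[symmetric] mv_mmult)
    also have "\<dots> = of_real (s m) * of_real (s m) * ip (V k) (E m)"
      by (simp add: eigS mv_sm ip_sm_right)
    finally have a1: "ip (V k) (mv H (E m)) = of_real (s m * s m) * ip (V k) (E m)" by simp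
    have "ip (V k) (mv H (E m)) = ip (V k) (mv S (mv S (E m)))" by (simp add: SS[symmetric] mv_mmult)
    also have "\<dots> = ip (mv S (mv S (V k))) (E m)" by (simp add: herm_ip[OF hS])
    also have "\<dots> = ip (mv H (V k)) (E m)" by (simp add: SS[symmetric] mv_mmult)
    also have "\<dots> = of_real (d k) * ip (V k) (E m)" by (simp add: eigH ip_sm_left)
    finally have "of_real (s m * s m) * ip (V k) (E m) = of_real (d k) * ip (V k) (E m)" using a1 by simp
    then have "(of_real (s m * s m) :: complex) = of_real (d k)" using False by (metis mult_cancel_right)
    then have "s m * s m = d k" by (simp only: of_real_eq_iff)
    then have "sqrt (d k) = s m" using spos[of m] by (metis real_sqrt_abs power2_eq_square abs_of_nonneg)
    then show ?thesis by (simp add: eigS ip_sm_right)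
  qed
  have SV: "mv S (V k) = sm (of_real (sqrt (d k))) (V k)" for k
  proof (rule ons_vec_eqI[OF onE])
    fix m
    have "ip (mv S (V k)) (E m) = ip (V k) (mv S (E m))" by (simp add: herm_ip[OF hS])
    also have "\<dots> = ip (sm (of_real (sqrt (d k))) (V k)) (E m)" by (simp add: key ip_sm_left)
    finally show "ip (mv S (V k)) (E m) = ip (sm (of_real (sqrt (d k))) (V k)) (E m)" .
  qed
  show ?thesis
  proof (rule mat_eqI)
    fix x
    show "mv S x = mv (wsum V (\<lambda>k. of_real (sqrt (d k)))) x"
      by (simp add: spec_mv[OF on SV] mv_wsum)
  qed
qed

lemma msqrt_eq:
  fixes V :: "'n \<Rightarrow> 'n::finite \<Rightarrow> complex"
  assumes on: "ons V UNIV" and eigH: "\<And>k. mv H (V k) = sm (of_real (d k)) (V k)"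
    and dpos: "\<And>k. d k \<ge> 0"
  shows "msqrt H = wsum V (\<lambda>k. of_real (sqrt (d k)))"
  unfolding msqrt_def
proof (rule the_equality)
  let ?R = "wsum V (\<lambda>k. of_real (sqrt (d k)))"
  have eR: "\<And>k. mv ?R (V k) = sm (of_real (sqrt (d k))) (V k)" by (rule wsum_eig[OF on])
  show "psd ?R \<and> mmult ?R ?R = H"
  proof
    show "psd ?R" by (rule psd_wsum[where g="\<lambda>k. sqrt (d k)"]) (simp_all add: dpos)
    show "mmult ?R ?R = H"
    proof (rule mat_eqI)
      fix x
      have rx: "mv ?R x = (\<Sum>k\<in>UNIV. sm (ip (V k) x * of_real (sqrt (d k))) (V k))"
        by (rule spec_mv[OF on eR])
      have "mv (mmult ?R ?R) x = mv ?R (mv ?R x)" by (rule mv_mmult)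
      also have "\<dots> = (\<Sum>k\<in>UNIV. sm (ip (V k) x * of_real (sqrt (d k)) * of_real (sqrt (d k))) (V k))"
        unfolding rx by (rule mv_sum_eig[OF eR])
      also have "\<dots> = (\<Sum>k\<in>UNIV. sm (ip (V k) x * of_real (d k)) (V k))"
      proof (rule sum.cong)
        fix k
        have "of_real (sqrt (d k)) * of_real (sqrt (d k)) = (of_real (d k) :: complex)"
          using dpos[of k] by (metis of_real_mult real_sqrt_mult_self abs_of_nonneg)
        then show "sm (ip (V k) x * of_real (sqrt (d k)) * of_real (sqrt (d k))) (V k) = sm (ip (V k) x * of_real (d k)) (V k)"
          by (simp add: mult.assoc)
      qed simp
      also have "\<dots> = mv H x" by (simp add: spec_mv[OF on eigH])
      finally show "mv (mmult ?R ?R) x = mv H x" .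
    qed
  qed
  show "\<And>S. psd S \<and> mmult S S = H \<Longrightarrow> S = ?R"
    using sqrt_unique[OF on eigH dpos] by blast
qed

lemma tn_data:
  fixes X :: "'n::finite cmat"
  shows "\<exists>(V::'n \<Rightarrow> 'n \<Rightarrow> complex) d. ons V UNIV \<and> (\<forall>k. 0 \<le> d k) \<and>
     (\<forall>k. mv (mmult (adj X) X) (V k) = sm (of_real (d k)) (V k)) \<and>
     trace_norm X = (\<Sum>k\<in>UNIV. sqrt (d k))"
proof -
  let ?H = "mmult (adj X) X"
  have "adj ?H = ?H" by (simp add: adj_mmult)
  then obtain V :: "'n \<Rightarrow> 'n \<Rightarrow> complex" and d where on: "ons V UNIV"
    and eig: "\<And>k. mv ?H (V k) = sm (of_real (d k)) (V k)" using spectral by blast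
  have dpos: "d k \<ge> 0" for k
  proof -
    have "of_real (d k) = ip (V k) (mv ?H (V k))"
      using on by (simp add: eig ip_sm_right ons_def)
    also have "\<dots> = ip (mv X (V k)) (mv X (V k))" by (simp add: mv_mmult ip_adj)
    finally have "d k = Re (ip (mv X (V k)) (mv X (V k)))" by (metis Re_complex_of_real)
    then show ?thesis using ip_self_ge by simp
  qed
  have "trace_norm X = Re (mtrace (wsum V (\<lambda>k. of_real (sqrt (d k)))))"
    by (simp add: trace_norm_def msqrt_eq[OF on eig dpos])
  also have "\<dots> = (\<Sum>k\<in>UNIV. sqrt (d k))"
    using on by (simp add: mtrace_wsum ons_def)
  finally have tn: "trace_norm X = (\<Sum>k\<in>UNIV. sqrt (d k))" .
  show ?thesis by (rule exI[of _ V], rule exI[of _ d]) (simp add: on eig dpos tn)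
qed

lemma re_mult_le: "2 * Re (a * b) \<le> (cmod a)^2 + (cmod b)^2"
proof -
  have "Re (a*b) \<le> cmod (a*b)" by (rule complex_Re_le_cmod)
  also have "\<dots> = cmod a * cmod b" by (simp add: norm_mult)
  finally have h1: "2 * Re (a*b) \<le> 2 * (cmod a * cmod b)" by simp
  have "0 \<le> (cmod a)^2 + (cmod b)^2 - 2 * (cmod a * cmod b)"
    using power2_diff[of "cmod a" "cmod b"] zero_le_power2[of "cmod a - cmod b"] by (simp add: mult.assoc)
  then show ?thesis using h1 by linarith
qed

lemma mtrace_psd_real: assumes "psd A" shows "mtrace A = of_real (Re (mtrace A))"
proof -
  have "Im (mtrace A) = (\<Sum>i\<in>UNIV. Im (qform A (ev i)))"
    by (simp add: mtrace_ev qform_ip Im_sum)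
  also have "\<dots> = 0" using assms by (simp add: psd_def)
  finally show ?thesis by (simp add: complex_eq_iff)
qed

lemma ons_ev: "ons ev UNIV"
  unfolding ons_def ip_ev_left by (simp add: ev_def)

lemma parseval_ev: "(\<Sum>i\<in>UNIV. (cmod (ip (ev i) x))^2) = Re (ip x x)"
  using parseval[OF ons_ev, of x] by simp

lemma sum_qform:
  fixes E :: "'n \<Rightarrow> 'n::finite \<Rightarrow> complex"
  assumes onE: "ons E UNIV" and eig: "\<And>m. mv A (E m) = sm (of_real (a m)) (E m)"
  shows "(\<Sum>k\<in>K. Re (qform A (W k))) = (\<Sum>m\<in>UNIV. a m * (\<Sum>k\<in>K. (cmod (ip (W k) (E m)))^2))"
proof -
  have "(\<Sum>k\<in>K. Re (qform A (W k))) = (\<Sum>k\<in>K. \<Sum>m\<in>UNIV. (cmod (ip (E m) (W k)))^2 * a m)"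
    by (simp add: spec_qform[OF onE eig] Re_sum)
  also have "\<dots> = (\<Sum>m\<in>UNIV. \<Sum>k\<in>K. (cmod (ip (E m) (W k)))^2 * a m)" by (rule sum.swap)
  also have "\<dots> = (\<Sum>m\<in>UNIV. a m * (\<Sum>k\<in>K. (cmod (ip (W k) (E m)))^2))"
  proof -
    have "\<And>m k. cmod (ip (E m) (W k)) = cmod (ip (W k) (E m))" by (metis cnj_ip complex_mod_cnj)
    then show ?thesis by (simp add: sum_distrib_left mult.commute)
  qed
  finally show ?thesis .
qed

lemma trace_le:
  fixes A :: "'n::finite cmat"
  assumes A: "psd A" and fin: "finite K" and on: "ons W K"
  shows "(\<Sum>k\<in>K. Re (qform A (W k))) \<le> Re (mtrace A)"
proof -
  obtain E :: "'n \<Rightarrow> 'n \<Rightarrow> complex" and a where onE: "ons E UNIV"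
    and eig: "\<And>m. mv A (E m) = sm (of_real (a m)) (E m)"
    using spectral[OF psd_herm[OF A]] by blast
  have apos: "a m \<ge> 0" for m
  proof -
    have "qform A (E m) = of_real (a m)"
      using onE by (simp add: qform_ip eig ip_sm_right ons_def)
    then show ?thesis using A by (metis psd_def Re_complex_of_real)
  qed
  have nE: "Re (ip (E m) (E m)) = 1" for m using onE by (simp add: ons_def)
  have "(\<Sum>k\<in>K. Re (qform A (W k))) = (\<Sum>m\<in>UNIV. a m * (\<Sum>k\<in>K. (cmod (ip (W k) (E m)))^2))"
    by (rule sum_qform[OF onE eig])
  also have "\<dots> \<le> (\<Sum>m\<in>UNIV. a m * 1)"
  proof (rule sum_mono)
    fix m
    have "(\<Sum>k\<in>K. (cmod (ip (W k) (E m)))^2) \<le> 1" using bessel[OF fin on, of "E m"] nE by simp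
    then show "a m * (\<Sum>k\<in>K. (cmod (ip (W k) (E m)))^2) \<le> a m * 1" by (rule mult_left_mono[OF _ apos])
  qed
  also have "\<dots> = (\<Sum>m\<in>UNIV. a m * (\<Sum>i\<in>UNIV. (cmod (ip (ev i) (E m)))^2))"
    by (simp only: parseval_ev nE)
  also have "\<dots> = (\<Sum>i\<in>UNIV. Re (qform A (ev i)))" by (rule sum_qform[OF onE eig, symmetric])
  also have "\<dots> = Re (mtrace A)" by (simp add: mtrace_ev qform_ip Re_sum)
  finally show ?thesis .
qed

lemma psd_trace0:
  fixes A :: "'n::finite cmat"
  assumes A: "psd A" and t: "Re (mtrace A) = 0"
  shows "A = (\<lambda>i j. 0)"
proof -
  obtain E :: "'n \<Rightarrow> 'n \<Rightarrow> complex" and a where onE: "ons E UNIV"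
    and eig: "\<And>m. mv A (E m) = sm (of_real (a m)) (E m)"
    using spectral[OF psd_herm[OF A]] by blast
  have apos: "a m \<ge> 0" for m
  proof -
    have "qform A (E m) = of_real (a m)"
      using onE by (simp add: qform_ip eig ip_sm_right ons_def)
    then show ?thesis using A by (metis psd_def Re_complex_of_real)
  qed
  have nE: "Re (ip (E m) (E m)) = 1" for m using onE by (simp add: ons_def)
  have "Re (mtrace A) = (\<Sum>i\<in>UNIV. Re (qform A (ev i)))" by (simp add: mtrace_ev qform_ip Re_sum)
  also have "\<dots> = (\<Sum>m\<in>UNIV. a m * (\<Sum>i\<in>UNIV. (cmod (ip (ev i) (E m)))^2))" by (rule sum_qform[OF onE eig])
  also have "\<dots> = (\<Sum>m\<in>UNIV. a m)"
    by (simp only: parseval_ev nE mult_1_right)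
  finally have "(\<Sum>m\<in>UNIV. a m) = 0" using t by simp
  then have a0: "a m = 0" for m using apos by (simp add: sum_nonneg_eq_0_iff)
  show ?thesis
  proof (rule mat_eqI)
    fix x
    have "mv A x = 0" by (simp add: spec_mv[OF onE eig] a0)
    moreover have "mv (\<lambda>i j. 0) x = 0" by (simp add: mv_def fun_eq_iff)
    ultimately show "mv A x = mv (\<lambda>i j. 0) x" by simp
  qed
qed

definition svdW :: "'n::finite cmat \<Rightarrow> ('n \<Rightarrow> 'n \<Rightarrow> complex) \<Rightarrow> ('n \<Rightarrow> real) \<Rightarrow> 'n \<Rightarrow> 'n \<Rightarrow> complex" where
  "svdW X V d k = (if d k > 0 then sm (of_real (1 / sqrt (d k))) (mv X (V k)) else 0)"

context
  fixes X :: "'n::finite cmat" and V :: "'n \<Rightarrow> 'n \<Rightarrow> complex" and d :: "'n \<Rightarrow> real"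
  assumes on: "ons V UNIV" and dpos: "\<And>k. 0 \<le> d k"
    and eig: "\<And>k. mv (mmult (adj X) X) (V k) = sm (of_real (d k)) (V k)"
begin

lemma svd_xx: "ip (mv X (V k)) (mv X (V l)) = (if k = l then of_real (d k) else 0)"
proof -
  have "ip (mv X (V k)) (mv X (V l)) = ip (V k) (mv (mmult (adj X) X) (V l))"
    by (simp add: mv_mmult ip_adj)
  also have "\<dots> = of_real (d l) * ip (V k) (V l)" by (simp add: eig ip_sm_right)
  finally show ?thesis using on by (simp add: ons_def)
qed

lemma svd_X0: "d k = 0 \<Longrightarrow> mv X (V k) = 0"
  using svd_xx[of k k] by (simp add: ip_self_zero)

lemma svd_XW: "mv X (V k) = sm (of_real (sqrt (d k))) (svdW X V d k)"
proof (cases "d k > 0")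
  case True
  then show ?thesis by (simp add: svdW_def sm_sm)
next
  case False
  then have "d k = 0" using dpos[of k] by simp
  then show ?thesis using False by (simp add: svdW_def svd_X0)
qed

lemma svd_onsW: "ons (svdW X V d) {k. d k > 0}"
  unfolding ons_def
proof (intro ballI)
  fix k l assume k: "k \<in> {k. d k > 0}" and l: "l \<in> {k. d k > 0}"
  have "ip (svdW X V d k) (svdW X V d l) =
        of_real (1 / sqrt (d k)) * of_real (1 / sqrt (d l)) * ip (mv X (V k)) (mv X (V l))"
    using k l by (simp add: svdW_def ip_sm_left ip_sm_right)
  also have "\<dots> = (if k = l then 1 else 0)"
    using k by (auto simp: svd_xx field_simps simp flip: of_real_mult)
  finally show "ip (svdW X V d k) (svdW X V d l) = (if k = l then 1 else 0)" .
qed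

lemma svd_WX: "ip (svdW X V d k) (mv X (V k)) = of_real (sqrt (d k))"
proof (cases "d k > 0")
  case True
  then have "ip (svdW X V d k) (svdW X V d k) = 1" using svd_onsW by (simp add: ons_def)
  then show ?thesis by (simp add: svd_XW ip_sm_right)
next
  case False
  then have "d k = 0" using dpos[of k] by simp
  then show ?thesis by (simp add: svd_X0)
qed

lemma svd_exp: "ip u (mv X v) = (\<Sum>k\<in>UNIV. ip (V k) v * of_real (sqrt (d k)) * ip u (svdW X V d k))"
proof -
  have "mv X v = mv X (\<Sum>k\<in>UNIV. sm (ip (V k) v) (V k))"
    by (rule arg_cong[where f="mv X"]) (rule ons_complete[OF on])
  also have "\<dots> = (\<Sum>k\<in>UNIV. sm (ip (V k) v * of_real (sqrt (d k))) (svdW X V d k))"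
    by (simp add: mv_sum mv_sm svd_XW sm_sm)
  finally show ?thesis by (simp add: ip_sum_right ip_sm_right mult.assoc)
qed

lemma svd_cert:
  "2 * Re (ip u (mv X v)) \<le> Re (qform (wsum (svdW X V d) (\<lambda>k. of_real (sqrt (d k)))) u)
     + Re (qform (wsum V (\<lambda>k. of_real (sqrt (d k)))) v)"
proof -
  have "2 * Re (ip u (mv X v)) = (\<Sum>k\<in>UNIV. sqrt (d k) * (2 * Re (ip (V k) v * ip u (svdW X V d k))))"
    by (simp add: svd_exp Re_sum sum_distrib_left algebra_simps)
  also have "\<dots> \<le> (\<Sum>k\<in>UNIV. sqrt (d k) * ((cmod (ip (V k) v))^2 + (cmod (ip u (svdW X V d k)))^2))"
    by (rule sum_mono, rule mult_left_mono, rule re_mult_le) (simp add: dpos)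
  also have "\<dots> = Re (qform (wsum (svdW X V d) (\<lambda>k. of_real (sqrt (d k)))) u)
     + Re (qform (wsum V (\<lambda>k. of_real (sqrt (d k)))) v)"
  proof -
    have "\<And>k. cmod (ip u (svdW X V d k)) = cmod (ip (svdW X V d k) u)" by (metis cnj_ip complex_mod_cnj)
    then show ?thesis by (simp add: qform_wsum Re_sum algebra_simps sum.distrib)
  qed
  finally show ?thesis .
qed

lemma svd_trW: "Re (mtrace (wsum (svdW X V d) (\<lambda>k. of_real (sqrt (d k))))) = (\<Sum>k\<in>UNIV. sqrt (d k))"
proof -
  have "Re (mtrace (wsum (svdW X V d) (\<lambda>k. of_real (sqrt (d k))))) =
        (\<Sum>k\<in>UNIV. sqrt (d k) * Re (ip (svdW X V d k) (svdW X V d k)))"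
    by (simp add: mtrace_wsum Re_sum)
  also have "\<dots> = (\<Sum>k\<in>UNIV. sqrt (d k))"
  proof (rule sum.cong)
    fix k
    show "sqrt (d k) * Re (ip (svdW X V d k) (svdW X V d k)) = sqrt (d k)"
    proof (cases "d k > 0")
      case True then show ?thesis using svd_onsW by (simp add: ons_def)
    next
      case False then have "d k = 0" using dpos[of k] by simp
      then show ?thesis by simp
    qed
  qed simp
  finally show ?thesis .
qed

lemma svd_trV: "Re (mtrace (wsum V (\<lambda>k. of_real (sqrt (d k))))) = (\<Sum>k\<in>UNIV. sqrt (d k))"
  using on by (simp add: mtrace_wsum Re_sum ons_def)

end

lemma cert_exists:
  fixes X :: "'n::finite cmat"
  shows "\<exists>P Q. psd P \<and> psd Q \<and> Re (mtrace P) = trace_norm X \<and> Re (mtrace Q) = trace_norm X \<and>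
     (\<forall>u v. 2 * Re (ip u (mv X v)) \<le> Re (qform Q u) + Re (qform P v))"
proof -
  obtain V :: "'n \<Rightarrow> 'n \<Rightarrow> complex" and d where on: "ons V UNIV" and dpos: "\<forall>k. 0 \<le> d k"
    and eig: "\<forall>k. mv (mmult (adj X) X) (V k) = sm (of_real (d k)) (V k)"
    and tn: "trace_norm X = (\<Sum>k\<in>UNIV. sqrt (d k))"
    using tn_data[of X] by blast
  have dpos': "\<And>k. 0 \<le> d k" using dpos by blast
  have eig': "\<And>k. mv (mmult (adj X) X) (V k) = sm (of_real (d k)) (V k)" using eig by blast
  let ?P = "wsum V (\<lambda>k. of_real (sqrt (d k)))"
  let ?Q = "wsum (svdW X V d) (\<lambda>k. of_real (sqrt (d k)))"
  have "psd ?P" by (rule psd_wsum[where g="\<lambda>k. sqrt (d k)"]) (simp_all add: dpos)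
  moreover have "psd ?Q" by (rule psd_wsum[where g="\<lambda>k. sqrt (d k)"]) (simp_all add: dpos)
  moreover have "Re (mtrace ?P) = trace_norm X" using svd_trV[OF on dpos' eig'] tn by simp
  moreover have "Re (mtrace ?Q) = trace_norm X" using svd_trW[OF on dpos' eig'] tn by simp
  moreover have "\<forall>u v. 2 * Re (ip u (mv X v)) \<le> Re (qform ?Q u) + Re (qform ?P v)"
    using svd_cert[OF on dpos' eig'] by simp
  ultimately show ?thesis by blast
qed

lemma pair_lower:
  fixes X A B :: "'n::finite cmat"
  assumes A: "psd A" and B: "psd B"
    and hyp: "\<And>u v. 2 * Re (ip u (mv X v)) \<le> Re (qform A u) + Re (qform B v)"
  shows "2 * trace_norm X \<le> Re (mtrace A) + Re (mtrace B)"
proof -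
  obtain V :: "'n \<Rightarrow> 'n \<Rightarrow> complex" and d where on: "ons V UNIV" and dpos: "\<forall>k. 0 \<le> d k"
    and eig: "\<forall>k. mv (mmult (adj X) X) (V k) = sm (of_real (d k)) (V k)"
    and tn: "trace_norm X = (\<Sum>k\<in>UNIV. sqrt (d k))"
    using tn_data[of X] by blast
  have dpos': "\<And>k. 0 \<le> d k" using dpos by blast
  have eig': "\<And>k. mv (mmult (adj X) X) (V k) = sm (of_real (d k)) (V k)" using eig by blast
  let ?W = "svdW X V d"
  have "2 * trace_norm X = (\<Sum>k\<in>UNIV. 2 * Re (ip (?W k) (mv X (V k))))"
    using svd_WX[OF on dpos' eig'] by (simp add: tn sum_distrib_left)
  also have "\<dots> \<le> (\<Sum>k\<in>UNIV. Re (qform A (?W k)) + Re (qform B (V k)))"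
    by (rule sum_mono) (rule hyp)
  also have "\<dots> = (\<Sum>k\<in>{k. d k > 0}. Re (qform A (?W k))) + (\<Sum>k\<in>UNIV. Re (qform B (V k)))"
  proof -
    have "(\<Sum>k\<in>UNIV. Re (qform A (?W k))) = (\<Sum>k\<in>{k. d k > 0}. Re (qform A (?W k)))"
      by (rule sum.mono_neutral_right) (auto simp: svdW_def)
    then show ?thesis by (simp add: sum.distrib)
  qed
  also have "\<dots> \<le> Re (mtrace A) + Re (mtrace B)"
    using trace_le[OF A _ svd_onsW[OF on dpos' eig']] trace_le[OF B _ on] by (simp add: add_mono)
  finally show ?thesis .
qed

lemma sum_pair: "(\<Sum>p\<in>UNIV. f p) = (\<Sum>a\<in>UNIV. \<Sum>b\<in>UNIV. f (a, b))"
  for f :: "('a::finite \<times> 'b::finite) \<Rightarrow> 'c::comm_monoid_add"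
  by (simp add: sum.cartesian_product)

lemma qform_block:
  fixes M :: "('a::finite \<times> 'b::finite) cmat"
  shows "qform M w = (\<Sum>a\<in>UNIV. \<Sum>a'\<in>UNIV. ip (\<lambda>b. w (a, b)) (mv (block M a a') (\<lambda>b. w (a', b))))"
proof -
  have "qform M w = (\<Sum>a\<in>UNIV. \<Sum>b\<in>UNIV. \<Sum>a'\<in>UNIV. \<Sum>b'\<in>UNIV.
          cnj (w (a, b)) * M (a, b) (a', b') * w (a', b'))"
    by (simp add: qform_def sum_pair)
  also have "\<dots> = (\<Sum>a\<in>UNIV. \<Sum>a'\<in>UNIV. \<Sum>b\<in>UNIV. \<Sum>b'\<in>UNIV.
          cnj (w (a, b)) * M (a, b) (a', b') * w (a', b'))"
    by (rule sum.cong[OF refl], rule sum.swap)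
  also have "\<dots> = (\<Sum>a\<in>UNIV. \<Sum>a'\<in>UNIV. ip (\<lambda>b. w (a, b)) (mv (block M a a') (\<lambda>b. w (a', b))))"
    by (simp add: ip_def mv_def block_def sum_distrib_left mult.assoc)
  finally show ?thesis .
qed

lemma mtrace_block:
  fixes M :: "('a::finite \<times> 'b::finite) cmat"
  shows "mtrace M = (\<Sum>a\<in>UNIV. mtrace (block M a a))"
  by (simp add: mtrace_def sum_pair block_def)

lemma sum_two:
  fixes g :: "'a::finite \<Rightarrow> 'c::comm_monoid_add"
  assumes "i \<noteq> j" and "\<And>a. a \<noteq> i \<Longrightarrow> a \<noteq> j \<Longrightarrow> g a = 0"
  shows "(\<Sum>a\<in>UNIV. g a) = g i + g j"
proof -
  have "(\<Sum>a\<in>UNIV. g a) = (\<Sum>a\<in>{i, j}. g a)"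
    by (rule sum.mono_neutral_right) (use assms in auto)
  also have "\<dots> = g i + g j" using assms(1) by simp
  finally show ?thesis .
qed

lemma qform_two:
  fixes M :: "('a::finite \<times> 'b::finite) cmat"
  assumes ij: "i \<noteq> j"
  shows "qform M (\<lambda>(a, b). if a = i then u b else if a = j then v b else 0) =
     qform (block M i i) u + ip u (mv (block M i j) v) + ip v (mv (block M j i) u) + qform (block M j j) v"
proof -
  define wb where "wb a = (if a = i then u else if a = j then v else 0)" for a
  have w: "(\<lambda>b. (\<lambda>(a, b). if a = i then u b else if a = j then v b else 0) (a, b)) = wb a" for a
    by (auto simp: wb_def fun_eq_iff)
  have "qform M (\<lambda>(a, b). if a = i then u b else if a = j then v b else 0) =
        (\<Sum>a\<in>UNIV. \<Sum>a'\<in>UNIV. ip (wb a) (mv (block M a a') (wb a')))"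
    unfolding qform_block w ..
  also have "\<dots> = (\<Sum>a'\<in>UNIV. ip (wb i) (mv (block M i a') (wb a'))) + (\<Sum>a'\<in>UNIV. ip (wb j) (mv (block M j a') (wb a')))"
    by (rule sum_two[OF ij]) (simp add: wb_def)
  also have "\<dots> = ip (wb i) (mv (block M i i) (wb i)) + ip (wb i) (mv (block M i j) (wb j))
      + (ip (wb j) (mv (block M j i) (wb i)) + ip (wb j) (mv (block M j j) (wb j)))"
    by (subst sum_two[OF ij], simp add: wb_def, subst sum_two[OF ij], simp add: wb_def, rule refl)
  also have "\<dots> = qform (block M i i) u + ip u (mv (block M i j) v) + ip v (mv (block M j i) u) + qform (block M j j) v"
    using ij by (simp add: wb_def qform_ip)
  finally show ?thesis .
qed

lemma sum_one:
  fixes g :: "'a::finite \<Rightarrow> 'c::comm_monoid_add"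
  assumes "\<And>a. a \<noteq> i \<Longrightarrow> g a = 0"
  shows "(\<Sum>a\<in>UNIV. g a) = g i"
proof -
  have "(\<Sum>a\<in>UNIV. g a) = (\<Sum>a\<in>{i}. g a)"
    by (rule sum.mono_neutral_right) (use assms in auto)
  then show ?thesis by simp
qed

lemma qform_one:
  fixes M :: "('a::finite \<times> 'b::finite) cmat"
  shows "qform M (\<lambda>(a, b). if a = i then u b else 0) = qform (block M i i) u"
proof -
  define wb where "wb a = (if a = i then u else 0)" for a
  have w: "(\<lambda>b. (\<lambda>(a, b). if a = i then u b else 0) (a, b)) = wb a" for a
    by (auto simp: wb_def fun_eq_iff)
  have "qform M (\<lambda>(a, b). if a = i then u b else 0) =
        (\<Sum>a\<in>UNIV. \<Sum>a'\<in>UNIV. ip (wb a) (mv (block M a a') (wb a')))"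
    unfolding qform_block w ..
  also have "\<dots> = (\<Sum>a'\<in>UNIV. ip (wb i) (mv (block M i a') (wb a')))"
    by (rule sum_one) (simp add: wb_def)
  also have "\<dots> = ip (wb i) (mv (block M i i) (wb i))"
    by (rule sum_one) (simp add: wb_def)
  finally show ?thesis by (simp add: wb_def qform_ip)
qed

lemma psd_block:
  fixes M :: "('a::finite \<times> 'b::finite) cmat"
  assumes M: "psd M"
  shows "psd (block M i i)"
  unfolding psd_iff
proof
  have "adj M = M" using M by (rule psd_herm)
  then show "adj (block M i i) = block M i i"
    by (simp add: adj_def block_def fun_eq_iff)
  show "\<forall>u. 0 \<le> Re (qform (block M i i) u)"
    using M by (simp add: psd_def flip: qform_one)
qed

lemma mtrace_kron: "mtrace (kron A B) = mtrace A * mtrace B"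
  by (simp add: mtrace_def kron_def sum_pair sum_product)

lemma IQ_facts:
  fixes \<sigma> :: "('a::finite \<times> 'b::finite) cmat"
  assumes "\<sigma> \<in> IQ"
  shows "mtrace \<sigma> = 1" and "\<And>a a' b b'. a \<noteq> a' \<Longrightarrow> \<sigma> (a, b) (a', b') = 0"
proof -
  obtain n and p :: "nat \<Rightarrow> real" and sA :: "nat \<Rightarrow> 'a cmat" and tB :: "nat \<Rightarrow> 'b cmat" where h: "\<forall>k<n. 0 \<le> p k \<and> density (sA k) \<and> diagonal (sA k) \<and> density (tB k)"
    "(\<Sum>k<n. p k) = 1" "\<sigma> = (\<lambda>x y. \<Sum>k<n. complex_of_real (p k) * kron (sA k) (tB k) x y)"
    using assms unfolding IQ_def by blast
  have "mtrace \<sigma> = (\<Sum>k<n. complex_of_real (p k) * mtrace (kron (sA k) (tB k)))"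
    by (simp add: h(3) mtrace_def sum_distrib_left sum.swap[of _ UNIV "{..<n}"])
  also have "\<dots> = (\<Sum>k<n. complex_of_real (p k))"
    by (rule sum.cong) (use h(1) in \<open>auto simp: mtrace_kron density_def\<close>)
  also have "\<dots> = 1" using h(2) by (simp flip: of_real_sum)
  finally show "mtrace \<sigma> = 1" .
  fix a a' :: 'a and b b' :: 'b assume "a \<noteq> a'"
  then show "\<sigma> (a, b) (a', b') = 0"
    using h(1) by (simp add: h(3) kron_def diagonal_def)
qed

lemma mv_neg: "mv (\<lambda>b b'. - X b b') v = - mv X v"
  by (simp add: mv_def fun_eq_iff sum_negf)

lemma partL:
  fixes \<rho> \<sigma> :: "('a::finite \<times> 'b::finite) cmat"
  assumes rho: "density \<rho>" and sig: "\<sigma> \<in> IQ"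
    and l: "loewner_le \<rho> (\<lambda>i j. complex_of_real (2 powr l) * \<sigma> i j)"
    and d2: "CARD('a) \<ge> 2"
  shows "1 + Cl1 \<rho> / (real CARD('a) - 1) \<le> 2 powr l"
proof -
  define M where "M = (\<lambda>i j. complex_of_real (2 powr l) * \<sigma> i j - \<rho> i j)"
  have psdM: "psd M" using l by (simp add: loewner_le_def M_def)
  have hr: "adj \<rho> = \<rho>" using rho by (simp add: density_def psd_herm)
  define t where "t a = Re (mtrace (block M a a))" for a
  have pair: "2 * trace_norm (block \<rho> i j) \<le> t i + t j" if ij: "i \<noteq> j" for i j
  proof -
    let ?X = "block \<rho> i j"
    have bij: "block M i j = (\<lambda>b b'. - ?X b b')"
      using IQ_facts(2)[OF sig ij] by (simp add: M_def block_def fun_eq_iff)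
    have "\<rho> (j, b) (i, b') = cnj (\<rho> (i, b') (j, b))" for b b'
      using fun_cong[OF fun_cong[OF hr, of "(j, b)"], of "(i, b')"] by (simp add: adj_def)
    then have bji: "block M j i = (\<lambda>b b'. - adj ?X b b')"
      using IQ_facts(2)[OF sig ij[symmetric]] by (simp add: M_def block_def fun_eq_iff adj_def)
    show ?thesis unfolding t_def
    proof (rule pair_lower[OF psd_block[OF psdM] psd_block[OF psdM]])
      fix u v
      have "0 \<le> Re (qform M (\<lambda>(a, b). if a = i then u b else if a = j then v b else 0))"
        using psdM by (simp add: psd_def)
      also have "\<dots> = Re (qform (block M i i) u) + Re (qform (block M j j) v) - 2 * Re (ip u (mv ?X v))"
      proof -
        have "ip v (mv (adj ?X) u) = cnj (ip u (mv ?X v))" by (simp add: ip_adj cnj_ip)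
        then show ?thesis
          by (simp add: qform_two[OF ij] bij bji mv_neg ip_def sum_negf)
      qed
      finally show "2 * Re (ip u (mv ?X v)) \<le> Re (qform (block M i i) u) + Re (qform (block M j j) v)"
        by simp
    qed
  qed
  have T: "(\<Sum>a\<in>UNIV. t a) = 2 powr l - 1"
  proof -
    have "(\<Sum>a\<in>UNIV. t a) = Re (mtrace M)" by (simp add: t_def mtrace_block Re_sum)
    also have "mtrace M = complex_of_real (2 powr l) * mtrace \<sigma> - mtrace \<rho>"
      by (simp add: M_def mtrace_def sum_subtractf sum_distrib_left)
    also have "\<dots> = complex_of_real (2 powr l) - 1"
      using IQ_facts(1)[OF sig] rho by (simp add: density_def)
    finally show ?thesis by simp
  qed
  define d where "d = real CARD('a)"
  have d1: "d - 1 > 0" using d2 by (simp add: d_def)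
  have cardi: "real (card (UNIV - {i} :: 'a set)) = d - 1" for i
    using d2 by (simp add: d_def card_Diff_singleton of_nat_diff)
  have "2 * Cl1 \<rho> = (\<Sum>i\<in>UNIV. \<Sum>j\<in>UNIV - {i}. 2 * trace_norm (block \<rho> i j))"
    by (simp add: Cl1_def sum_distrib_left)
  also have "\<dots> \<le> (\<Sum>i\<in>UNIV. \<Sum>j\<in>UNIV - {i}. t i + t j)"
    by (intro sum_mono pair) auto
  also have "\<dots> = (\<Sum>i\<in>UNIV. (d - 1) * t i + ((\<Sum>j\<in>UNIV. t j) - t i))"
  proof (rule sum.cong[OF refl])
    fix i
    have "(\<Sum>j\<in>UNIV - {i}. t i + t j) = real (card (UNIV - {i} :: 'a set)) * t i + (\<Sum>j\<in>UNIV - {i}. t j)"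
      by (simp add: sum.distrib)
    also have "(\<Sum>j\<in>UNIV - {i}. t j) = (\<Sum>j\<in>UNIV. t j) - t i" by (simp add: sum_diff1)
    finally show "(\<Sum>j\<in>UNIV - {i}. t i + t j) = (d - 1) * t i + ((\<Sum>j\<in>UNIV. t j) - t i)"
      using d2 by (simp add: d_def card_Diff_singleton of_nat_diff)
  qed
  also have "\<dots> = (d - 1) * (\<Sum>i\<in>UNIV. t i) + (d * (\<Sum>j\<in>UNIV. t j) - (\<Sum>i\<in>UNIV. t i))"
    by (simp add: sum.distrib sum_subtractf sum_distrib_left d_def)
  also have "\<dots> = 2 * (d - 1) * (2 powr l - 1)"
    by (simp add: T algebra_simps)
  finally have "2 * Cl1 \<rho> \<le> 2 * ((d - 1) * (2 powr l - 1))" by (simp only: mult.assoc)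
  then have "Cl1 \<rho> \<le> (d - 1) * (2 powr l - 1)" by simp
  then have "Cl1 \<rho> / (d - 1) \<le> 2 powr l - 1" using d1 by (simp add: divide_le_eq mult.commute)
  then show ?thesis by (simp add: d_def)
qed

lemma qform_mat_add: "qform (\<lambda>i j. A i j + B i j) v = qform A v + qform B v"
  by (simp add: qform_def algebra_simps sum.distrib)
lemma qform_mat_zero: "qform (\<lambda>i j. 0) v = 0"
  by (simp add: qform_def)
lemma qform_mat_sum: "qform (\<lambda>i j. \<Sum>k\<in>K. F k i j) v = (\<Sum>k\<in>K. qform (F k) v)"
  by (induction K rule: infinite_finite_induct) (simp_all add: qform_mat_add qform_mat_zero)
lemma qform_mat_div: "qform (\<lambda>i j. A i j / c) v = qform A v / c"
  by (simp add: qform_def sum_divide_distrib)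
lemma mtrace_mat_add: "mtrace (\<lambda>i j. A i j + B i j) = mtrace A + mtrace B"
  by (simp add: mtrace_def sum.distrib)
lemma mtrace_mat_sum: "mtrace (\<lambda>i j. \<Sum>k\<in>K. F k i j) = (\<Sum>k\<in>K. mtrace (F k))"
  by (simp add: mtrace_def) (rule sum.swap)
lemma mtrace_mat_div: "mtrace (\<lambda>i j. A i j / c) = mtrace A / c"
  by (simp add: mtrace_def sum_divide_distrib)

lemma psd_add: "psd A \<Longrightarrow> psd B \<Longrightarrow> psd (\<lambda>i j. A i j + B i j)"
  by (simp add: psd_def qform_mat_add)

lemma psd_trace_nonneg: "psd A \<Longrightarrow> 0 \<le> Re (mtrace A)"
  by (simp add: mtrace_ev qform_ip[symmetric] Re_sum psd_def sum_nonneg)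

lemma trace_norm_nonneg: "0 \<le> trace_norm (X :: 'n::finite cmat)"
proof -
  obtain V :: "'n \<Rightarrow> 'n \<Rightarrow> complex" and d where "ons V UNIV" "\<forall>k. 0 \<le> d k"
    "\<forall>k. mv (mmult (adj X) X) (V k) = sm (of_real (d k)) (V k)"
    "trace_norm X = (\<Sum>k\<in>UNIV. sqrt (d k))"
    using tn_data[of X] by blast
  then show ?thesis by (simp add: sum_nonneg)
qed

lemma Cl1_nonneg: "0 \<le> Cl1 \<rho>"
  by (simp add: Cl1_def sum_nonneg trace_norm_nonneg)

lemma sum_diff_if: "(\<Sum>j\<in>UNIV - {i}. f j) = (\<Sum>j\<in>(UNIV::'a::finite set). if j = i then 0 else f j)"
proof -
  have "(\<Sum>j\<in>UNIV - {i}. f j) = (\<Sum>j\<in>UNIV - {i}. if j = i then 0 else f j)"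
    by (rule sum.cong) auto
  also have "\<dots> = (\<Sum>j\<in>(UNIV::'a set). if j = i then 0 else f j)"
    by (rule sum.mono_neutral_left) auto
  finally show ?thesis .
qed

lemma offdiag_swap:
  fixes f :: "'a::finite \<Rightarrow> 'a \<Rightarrow> 'c::comm_monoid_add"
  shows "(\<Sum>a\<in>UNIV. \<Sum>j\<in>UNIV. if j = a then 0 else f j a) = (\<Sum>a\<in>UNIV. \<Sum>j\<in>UNIV. if j = a then 0 else f a j)"
proof -
  have "(\<Sum>a\<in>UNIV. \<Sum>j\<in>UNIV. if j = a then 0 else f j a) = (\<Sum>j\<in>UNIV. \<Sum>a\<in>UNIV. if j = a then 0 else f j a)"
    by (rule sum.swap)
  also have "\<dots> = (\<Sum>a\<in>UNIV. \<Sum>j\<in>UNIV. if j = a then 0 else f a j)"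
    by (rule sum.cong[OF refl], rule sum.cong[OF refl]) auto
  finally show ?thesis .
qed

lemma density_outer_ev: "density (outer (ev a))"
proof -
  have "ip (ev a) (ev a) = 1" by (subst ip_ev_left) (simp add: ev_def)
  then show ?thesis unfolding density_def psd_def by (simp add: qform_outer mtrace_outer)
qed

lemma diagonal_outer_ev: "diagonal (outer (ev a))"
  by (simp add: diagonal_def outer_def ev_def)

lemma density_scale:
  assumes A: "psd A" and t: "Re (mtrace A) = t" "t > 0"
  shows "density (\<lambda>i j. A i j / complex_of_real t)"
  unfolding density_def
proof
  show "psd (\<lambda>i j. A i j / complex_of_real t)"
    using A t by (simp add: psd_def qform_mat_div Im_divide_of_real Re_divide_of_real)
  have "mtrace A = complex_of_real t" using mtrace_psd_real[OF A] t by simp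
  then show "mtrace (\<lambda>i j. A i j / complex_of_real t) = 1"
    using t by (simp add: mtrace_mat_div)
qed

lemma offdiag_eq:
  fixes q p r :: "'a::finite \<Rightarrow> 'a \<Rightarrow> real"
  shows "(\<Sum>a\<in>UNIV. \<Sum>a'\<in>UNIV. if a = a' then (\<Sum>j\<in>UNIV. if j = a then 0 else (q a j + p j a) / 2) else - r a a')
       = (\<Sum>a\<in>UNIV. \<Sum>j\<in>UNIV. if j = a then 0 else (q a j + p a j) / 2 - r a j)"
proof -
  define F1 where "F1 a j = (if j = a then 0 else q a j / 2)" for a j
  define F2 where "F2 a j = (if j = a then 0 else p j a / 2)" for a j
  define F2' where "F2' a j = (if j = a then 0 else p a j / 2)" for a j
  define F3 where "F3 a j = (if j = a then 0 else - r a j)" for a j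
  have e1: "(if a = a' then (\<Sum>j\<in>UNIV. if j = a then 0 else (q a j + p j a) / 2) else - r a a')
      = (if a' = a then (\<Sum>j\<in>UNIV. F1 a j + F2 a j) else 0) + F3 a a'" for a a'
  proof (cases "a' = a")
    case True
    have "(\<Sum>j\<in>UNIV. if j = a then 0 else (q a j + p j a) / 2) = (\<Sum>j\<in>UNIV. F1 a j + F2 a j)"
      by (rule sum.cong[OF refl]) (simp add: F1_def F2_def add_divide_distrib)
    then show ?thesis using True by (simp add: F3_def)
  next
    case False then show ?thesis by (simp add: F3_def)
  qed
  have "(\<Sum>a\<in>UNIV. \<Sum>a'\<in>UNIV. if a = a' then (\<Sum>j\<in>UNIV. if j = a then 0 else (q a j + p j a) / 2) else - r a a')
      = (\<Sum>a\<in>UNIV. \<Sum>a'\<in>UNIV. (if a' = a then (\<Sum>j\<in>UNIV. F1 a j + F2 a j) else 0) + F3 a a')"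
    by (simp only: e1)
  also have "\<dots> = (\<Sum>a\<in>UNIV. (\<Sum>j\<in>UNIV. F1 a j + F2 a j) + (\<Sum>a'\<in>UNIV. F3 a a'))"
    by (simp only: sum.distrib sum.delta sum.delta' finite UNIV_I if_True)
  also have "\<dots> = (\<Sum>a\<in>UNIV. \<Sum>j\<in>UNIV. F1 a j) + (\<Sum>a\<in>UNIV. \<Sum>j\<in>UNIV. F2 a j) + (\<Sum>a\<in>UNIV. \<Sum>j\<in>UNIV. F3 a j)"
    by (simp only: sum.distrib)
  also have "(\<Sum>a\<in>UNIV. \<Sum>j\<in>UNIV. F2 a j) = (\<Sum>a\<in>UNIV. \<Sum>j\<in>UNIV. F2' a j)"
    unfolding F2_def F2'_def by (rule offdiag_swap)
  also have "(\<Sum>a\<in>UNIV. \<Sum>j\<in>UNIV. F1 a j) + (\<Sum>a\<in>UNIV. \<Sum>j\<in>UNIV. F2' a j) + (\<Sum>a\<in>UNIV. \<Sum>j\<in>UNIV. F3 a j)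
      = (\<Sum>a\<in>UNIV. \<Sum>j\<in>UNIV. F1 a j + F2' a j + F3 a j)"
    by (simp only: sum.distrib)
  also have "\<dots> = (\<Sum>a\<in>UNIV. \<Sum>j\<in>UNIV. if j = a then 0 else (q a j + p a j) / 2 - r a j)"
    by (intro sum.cong refl) (simp add: F1_def F2'_def F3_def add_divide_distrib)
  finally show ?thesis .
qed



lemma offdiag_sym:
  fixes f :: "'a::finite \<Rightarrow> 'a \<Rightarrow> real"
  shows "(\<Sum>a\<in>UNIV. \<Sum>j\<in>UNIV. if j = a then 0 else (f a j + f j a) / 2) = (\<Sum>a\<in>UNIV. \<Sum>j\<in>UNIV. if j = a then 0 else f a j)"
proof -
  have e: "(if j = a then 0 else (f a j + f j a) / 2) = (if j = a then 0 else f a j / 2) + (if j = a then 0 else f j a / 2)" for a j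
    by (simp add: add_divide_distrib)
  have "(\<Sum>a\<in>UNIV. \<Sum>j\<in>UNIV. if j = a then 0 else (f a j + f j a) / 2)
     = (\<Sum>a\<in>UNIV. \<Sum>j\<in>UNIV. if j = a then 0 else f a j / 2) + (\<Sum>a\<in>UNIV. \<Sum>j\<in>UNIV. if j = a then 0 else f j a / 2)"
    by (simp only: e sum.distrib)
  also have "(\<Sum>a\<in>UNIV. \<Sum>j\<in>UNIV. if j = a then 0 else f j a / 2) = (\<Sum>a\<in>UNIV. \<Sum>j\<in>UNIV. if j = a then 0 else f a j / 2)"
    by (rule offdiag_swap)
  also have "(\<Sum>a\<in>UNIV. \<Sum>j\<in>UNIV. if j = a then 0 else f a j / 2) + (\<Sum>a\<in>UNIV. \<Sum>j\<in>UNIV. if j = a then 0 else f a j / 2)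
     = (\<Sum>a\<in>UNIV. \<Sum>j\<in>UNIV. (if j = a then 0 else f a j / 2) + (if j = a then 0 else f a j / 2))"
    by (simp only: sum.distrib)
  also have "\<dots> = (\<Sum>a\<in>UNIV. \<Sum>j\<in>UNIV. if j = a then 0 else f a j)"
    by (intro sum.cong refl) simp
  finally show ?thesis .
qed

lemma ip_neg_right: "ip x (- y) = - ip x y"
  by (simp add: ip_def sum_negf)

lemma mzero: "mtrace (\<lambda>(i::'n::finite) (j::'n). 0) = 0" by (simp add: mtrace_def)

lemma partU:
  fixes \<rho> :: "('a::finite \<times> 'b::finite) cmat"
  assumes rho: "density \<rho>"
  shows "\<exists>\<sigma>\<in>IQ. loewner_le \<rho> (\<lambda>i j. complex_of_real (2 powr (log 2 (1 + Cl1 \<rho>))) * \<sigma> i j)"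
proof -
  have psdr: "psd \<rho>" and tr1: "mtrace \<rho> = 1" using rho by (auto simp: density_def)
  have hr: "adj \<rho> = \<rho>" using psdr by (rule psd_herm)
  have hr': "cnj (\<rho> y x) = \<rho> x y" for x y
    using fun_cong[OF fun_cong[OF hr, of x], of y] by (simp add: adj_def)
  have "\<forall>X::'b cmat. \<exists>PQ. psd (fst PQ) \<and> psd (snd PQ) \<and> Re (mtrace (fst PQ)) = trace_norm X \<and>
      Re (mtrace (snd PQ)) = trace_norm X \<and>
      (\<forall>u v. 2 * Re (ip u (mv X v)) \<le> Re (qform (snd PQ) u) + Re (qform (fst PQ) v))"
  proof
    fix X :: "'b cmat"
    obtain P Q where h: "psd P" "psd Q" "Re (mtrace P) = trace_norm X" "Re (mtrace Q) = trace_norm X"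
      "\<forall>u v. 2 * Re (ip u (mv X v)) \<le> Re (qform Q u) + Re (qform P v)"
      using cert_exists[of X] by blast
    show "\<exists>PQ. psd (fst PQ) \<and> psd (snd PQ) \<and> Re (mtrace (fst PQ)) = trace_norm X \<and>
      Re (mtrace (snd PQ)) = trace_norm X \<and>
      (\<forall>u v. 2 * Re (ip u (mv X v)) \<le> Re (qform (snd PQ) u) + Re (qform (fst PQ) v))"
      by (rule exI[of _ "(P, Q)"]) (simp add: h)
  qed
  from choice[OF this] obtain F :: "'b cmat \<Rightarrow> 'b cmat \<times> 'b cmat" where F:
    "\<forall>X. psd (fst (F X)) \<and> psd (snd (F X)) \<and> Re (mtrace (fst (F X))) = trace_norm X \<and>
      Re (mtrace (snd (F X))) = trace_norm X \<and>
      (\<forall>u v. 2 * Re (ip u (mv X v)) \<le> Re (qform (snd (F X)) u) + Re (qform (fst (F X)) v))"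
    by blast
  define PP where "PP X = fst (F X)" for X
  define QQ where "QQ X = snd (F X)" for X
  have PPpsd: "psd (PP X)" for X using F by (simp add: PP_def)
  have QQpsd: "psd (QQ X)" for X using F by (simp add: QQ_def)
  have trP: "Re (mtrace (PP X)) = trace_norm X" for X using F by (simp add: PP_def)
  have trQ: "Re (mtrace (QQ X)) = trace_norm X" for X using F by (simp add: QQ_def)
  have cert: "2 * Re (ip u (mv X v)) \<le> Re (qform (QQ X) u) + Re (qform (PP X) v)" for X u v
    using F by (simp add: PP_def QQ_def)
  have hP: "cnj (PP X b' b) = PP X b b'" for X b b'
  proof -
    have "adj (PP X) = PP X" by (rule psd_herm[OF PPpsd])
    then have "adj (PP X) b b' = PP X b b'" by simp
    then show ?thesis by (simp add: adj_def)
  qed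
  have hQ: "cnj (QQ X b' b) = QQ X b b'" for X b b'
  proof -
    have "adj (QQ X) = QQ X" by (rule psd_herm[OF QQpsd])
    then have "adj (QQ X) b b' = QQ X b b'" by simp
    then show ?thesis by (simp add: adj_def)
  qed
  define Dj where "Dj a j = (if j = a then (\<lambda>(b::'b) (b'::'b). 0::complex)
      else (\<lambda>b b'. (QQ (block \<rho> a j) b b' + PP (block \<rho> j a) b b') / 2))" for a j :: 'a
  define D where "D a = (\<lambda>b b'. \<Sum>j\<in>UNIV. Dj a j b b')" for a
  define \<Delta> where "\<Delta> = (\<lambda>(x::'a\<times>'b) (y::'a\<times>'b). if fst x = fst y then D (fst x) (snd x) (snd y) else - \<rho> x y)"
  have blk: "block \<Delta> a a' = (if a = a' then D a else (\<lambda>b b'. - block \<rho> a a' b b'))" for a a'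
    by (auto simp: block_def \<Delta>_def fun_eq_iff)
  have hDj: "cnj (Dj a j b' b) = Dj a j b b'" for a j b b'
    by (simp add: Dj_def hP hQ)
  have hD: "cnj (D a b' b) = D a b b'" for a b b'
    by (simp add: D_def hDj)
  have hDelta: "adj \<Delta> = \<Delta>"
    by (auto simp: adj_def \<Delta>_def fun_eq_iff hD hr')
  have qDj: "Re (qform (Dj a j) x) = (if j = a then 0 else (Re (qform (QQ (block \<rho> a j)) x) + Re (qform (PP (block \<rho> j a)) x)) / 2)" for a j x
    by (simp add: Dj_def qform_mat_zero qform_mat_add qform_mat_div)
  have qD: "Re (qform (D a) x) = (\<Sum>j\<in>UNIV. if j = a then 0 else (Re (qform (QQ (block \<rho> a j)) x) + Re (qform (PP (block \<rho> j a)) x)) / 2)" for a x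
    by (simp add: D_def qform_mat_sum Re_sum qDj)
  have psdDelta: "psd \<Delta>"
    unfolding psd_iff
  proof
    show "adj \<Delta> = \<Delta>" by (rule hDelta)
    show "\<forall>w. 0 \<le> Re (qform \<Delta> w)"
    proof
      fix w :: "'a \<times> 'b \<Rightarrow> complex"
      define wb where "wb a = (\<lambda>b. w (a, b))" for a
      define q where "q a j = Re (qform (QQ (block \<rho> a j)) (wb a))" for a j
      define p where "p a j = Re (qform (PP (block \<rho> a j)) (wb j))" for a j
      define r where "r a j = Re (ip (wb a) (mv (block \<rho> a j) (wb j)))" for a j
      have "Re (qform \<Delta> w) = (\<Sum>a\<in>UNIV. \<Sum>a'\<in>UNIV. Re (ip (wb a) (mv (block \<Delta> a a') (wb a'))))"
        by (simp add: qform_block Re_sum wb_def)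
      also have "\<dots> = (\<Sum>a\<in>UNIV. \<Sum>a'\<in>UNIV. if a = a' then (\<Sum>j\<in>UNIV. if j = a then 0 else (q a j + p j a) / 2) else - r a a')"
      proof (intro sum.cong refl)
        fix a a'
        show "Re (ip (wb a) (mv (block \<Delta> a a') (wb a'))) = (if a = a' then (\<Sum>j\<in>UNIV. if j = a then 0 else (q a j + p j a) / 2) else - r a a')"
        proof (cases "a = a'")
          case True
          then have eq: "a' = a" by simp
          show ?thesis unfolding eq q_def p_def by (simp add: blk qform_ip[symmetric] qD)
        next
          case False
          then show ?thesis by (simp add: blk mv_neg ip_neg_right r_def)
        qed
      qed
      also have "\<dots> = (\<Sum>a\<in>UNIV. \<Sum>j\<in>UNIV. if j = a then 0 else (q a j + p a j) / 2 - r a j)"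
        by (rule offdiag_eq)
      finally have eq: "Re (qform \<Delta> w) = (\<Sum>a\<in>UNIV. \<Sum>j\<in>UNIV. if j = a then 0 else (q a j + p a j) / 2 - r a j)" .
      have "0 \<le> (\<Sum>a\<in>UNIV. \<Sum>j\<in>UNIV. if j = a then 0 else (q a j + p a j) / 2 - r a j)"
      proof (intro sum_nonneg)
        fix a j
        have "2 * r a j \<le> q a j + p a j" unfolding q_def p_def r_def by (rule cert)
        then show "0 \<le> (if j = a then 0 else (q a j + p a j) / 2 - r a j)" by simp
      qed
      then show "0 \<le> Re (qform \<Delta> w)" using eq by simp
    qed
  qed
  have trDelta: "Re (mtrace \<Delta>) = Cl1 \<rho>"
  proof -
    have "Re (mtrace \<Delta>) = (\<Sum>a\<in>UNIV. \<Sum>j\<in>UNIV. Re (mtrace (Dj a j)))"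
      by (simp add: mtrace_block blk D_def mtrace_mat_sum Re_sum)
    also have "\<dots> = (\<Sum>a\<in>UNIV. \<Sum>j\<in>UNIV. if j = a then 0 else (trace_norm (block \<rho> a j) + trace_norm (block \<rho> j a)) / 2)"
      by (intro sum.cong refl) (simp add: Dj_def mtrace_mat_add mtrace_mat_div trP trQ mzero)
    also have "\<dots> = (\<Sum>a\<in>UNIV. \<Sum>j\<in>UNIV. if j = a then 0 else trace_norm (block \<rho> a j))"
      by (rule offdiag_sym)
    also have "\<dots> = Cl1 \<rho>" by (simp add: Cl1_def sum_diff_if)
    finally show ?thesis .
  qed
  define C where "C = Cl1 \<rho>"
  define c where "c = 1 + C"
  have cpos: "c > 0" using Cl1_nonneg[of \<rho>] by (simp add: c_def C_def)
  define G where "G = (\<lambda>x y. \<rho> x y + \<Delta> x y)"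
  have psdG: "psd G" unfolding G_def by (rule psd_add[OF psdr psdDelta])
  have trG: "Re (mtrace G) = c" by (simp add: G_def mtrace_mat_add tr1 trDelta c_def C_def)
  have Goff: "G (i, b) (j, b') = 0" if "i \<noteq> j" for i j b b'
    using that by (simp add: G_def \<Delta>_def)
  define t where "t a = Re (mtrace (block G a a))" for a
  have tpos: "t a \<ge> 0" for a unfolding t_def by (rule psd_trace_nonneg[OF psd_block[OF psdG]])
  have sumt: "(\<Sum>a\<in>UNIV. t a) = c" using trG by (simp add: t_def mtrace_block Re_sum)
  obtain g :: "nat \<Rightarrow> 'a" where g: "bij_betw g {..<CARD('a)} UNIV"
    using ex_bij_betw_nat_finite[of "UNIV::'a set"] by (auto simp: atLeast0LessThan)
  define tau where "tau a = (if t a = 0 then outer (ev undefined) else (\<lambda>b b'. block G a a b b' / of_real (t a)))" for a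
  have dtau: "density (tau a)" for a
  proof (cases "t a = 0")
    case True then show ?thesis by (simp add: tau_def density_outer_ev)
  next
    case False
    then have "t a > 0" using tpos[of a] by simp
    then show ?thesis using False
      by (simp add: tau_def density_scale[OF psd_block[OF psdG]] t_def)
  qed
  define \<sigma>0 where "\<sigma>0 = (\<lambda>x y. G x y / of_real c)"
  have repr: "\<sigma>0 = (\<lambda>x y. \<Sum>k<CARD('a). complex_of_real (t (g k) / c) * kron (outer (ev (g k))) (tau (g k)) x y)"
  proof (rule ext, rule ext)
    fix x y :: "'a \<times> 'b"
    obtain i b where x: "x = (i, b)" by (cases x)
    obtain j b' where y: "y = (j, b')" by (cases y)
    have "(\<Sum>k<CARD('a). complex_of_real (t (g k) / c) * kron (outer (ev (g k))) (tau (g k)) x y)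
        = (\<Sum>a\<in>UNIV. complex_of_real (t a / c) * kron (outer (ev a)) (tau a) x y)"
      by (rule sum.reindex_bij_betw[OF g])
    also have "\<dots> = complex_of_real (t i / c) * kron (outer (ev i)) (tau i) x y"
      by (rule sum_one) (simp add: x kron_def outer_def ev_def)
    also have "\<dots> = \<sigma>0 x y"
    proof (cases "i = j")
      case False
      then show ?thesis by (simp add: x y kron_def outer_def ev_def \<sigma>0_def Goff)
    next
      case True
      show ?thesis
      proof (cases "t i = 0")
        case True
        have bz: "block G i i = (\<lambda>i j. 0)"
          by (rule psd_trace0[OF psd_block[OF psdG]]) (simp add: True[unfolded t_def])
        have "G (i, b) (i, b') = 0" using fun_cong[OF fun_cong[OF bz, of b], of b'] by (simp add: block_def)
        then show ?thesis using True \<open>i = j\<close> by (simp add: x y \<sigma>0_def)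
      next
        case False
        then show ?thesis using \<open>i = j\<close> cpos
          by (simp add: x y kron_def outer_def ev_def \<sigma>0_def tau_def block_def)
      qed
    qed
    finally show "\<sigma>0 x y = (\<Sum>k<CARD('a). complex_of_real (t (g k) / c) * kron (outer (ev (g k))) (tau (g k)) x y)"
      by simp
  qed
  have sum1: "(\<Sum>k<CARD('a). t (g k) / c) = 1"
  proof -
    have "(\<Sum>k<CARD('a). t (g k) / c) = (\<Sum>a\<in>UNIV. t a / c)" by (rule sum.reindex_bij_betw[OF g])
    also have "\<dots> = 1" using cpos by (simp add: sum_divide_distrib[symmetric] sumt)
    finally show ?thesis .
  qed
  have inIQ: "\<sigma>0 \<in> IQ"
    unfolding IQ_def mem_Collect_eq
    by (rule exI[of _ "CARD('a)"], rule exI[of _ "\<lambda>k. t (g k) / c"],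
        rule exI[of _ "\<lambda>k. outer (ev (g k))"], rule exI[of _ "\<lambda>k. tau (g k)"])
       (use cpos tpos sum1 repr dtau density_outer_ev diagonal_outer_ev in auto)
  have "2 powr (log 2 (1 + Cl1 \<rho>)) = c" using cpos by (simp add: c_def C_def)
  then have "(\<lambda>i j. complex_of_real (2 powr (log 2 (1 + Cl1 \<rho>))) * \<sigma>0 i j - \<rho> i j) = \<Delta>"
    using cpos by (simp add: \<sigma>0_def G_def fun_eq_iff)
  then have "loewner_le \<rho> (\<lambda>i j. complex_of_real (2 powr (log 2 (1 + Cl1 \<rho>))) * \<sigma>0 i j)"
    by (simp add: loewner_le_def psdDelta)
  then show ?thesis using inIQ by blast
qed

theorem proposition8:
  fixes \<rho> :: "('a::finite \<times> 'b::finite) cmat"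
  assumes "card (UNIV :: 'a set) \<ge> 2"
    and "density \<rho>"
  shows "1 + Cl1 \<rho> / (real (card (UNIV :: 'a set)) - 1) \<le> 2 powr (real_of_ereal (Cmax \<rho>))
         \<and> 2 powr (real_of_ereal (Cmax \<rho>)) \<le> 1 + Cl1 \<rho>"
proof -
  define C where "C = Cl1 \<rho>"
  define d where "d = real (card (UNIV :: 'a set))"
  have C0: "C \<ge> 0" by (simp add: C_def Cl1_nonneg)
  have d1: "d - 1 > 0" using assms(1) by (simp add: d_def)
  define l0 where "l0 = log 2 (1 + C)"
  define L0 where "L0 = log 2 (1 + C / (d - 1))"
  have pos1: "1 + C / (d - 1) > 0" using C0 d1 by (simp add: add_pos_nonneg)
  have l0pos: "l0 \<ge> 0" using C0 by (simp add: l0_def)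
  obtain \<sigma>0 where s0: "\<sigma>0 \<in> IQ"
    and lw: "loewner_le \<rho> (\<lambda>i j. complex_of_real (2 powr l0) * \<sigma>0 i j)"
    using partU[OF assms(2)] by (auto simp: l0_def C_def)
  have "Dmax \<rho> \<sigma>0 \<le> ereal l0"
    unfolding Dmax_def by (rule Inf_lower) (use l0pos lw in auto)
  then have up: "Cmax \<rho> \<le> ereal l0"
    unfolding Cmax_def by (rule INF_lower2[OF s0])
  have low: "ereal L0 \<le> Cmax \<rho>"
    unfolding Cmax_def
  proof (rule INF_greatest)
    fix \<sigma> :: "('a \<times> 'b) cmat" assume sig: "\<sigma> \<in> IQ"
    show "ereal L0 \<le> Dmax \<rho> \<sigma>"
      unfolding Dmax_def
    proof (rule Inf_greatest)
      fix x assume "x \<in> ereal ` {l. 0 \<le> l \<and> loewner_le \<rho> (\<lambda>i j. complex_of_real (2 powr l) * \<sigma> i j)}"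
      then obtain l where x: "x = ereal l" and l: "loewner_le \<rho> (\<lambda>i j. complex_of_real (2 powr l) * \<sigma> i j)"
        by auto
      have "1 + C / (d - 1) \<le> 2 powr l"
        using partL[OF assms(2) sig l] assms(1) by (simp add: C_def d_def)
      then have "L0 \<le> log 2 (2 powr l)" unfolding L0_def using pos1 by (intro log_mono) auto
      then have "L0 \<le> l" by simp
      then show "ereal L0 \<le> x" by (simp add: x)
    qed
  qed
  obtain cm where cm: "Cmax \<rho> = ereal cm"
    using up low by (cases "Cmax \<rho>") auto
  have "L0 \<le> cm" "cm \<le> l0" using up low cm by auto
  then have "2 powr L0 \<le> 2 powr cm" "2 powr cm \<le> 2 powr l0" by (auto intro: powr_mono)
  moreover have "2 powr L0 = 1 + C / (d - 1)" using pos1 by (simp add: L0_def)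
  moreover have "2 powr l0 = 1 + C" using C0 by (simp add: l0_def)
  ultimately show ?thesis by (simp add: cm C_def d_def)
qed

end
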